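(* Let $\lambda\in(\frac16,\frac56)$. For every $x\in[0,1]\setminus\mathcal E$, $$h_{F^\lambda}(x)\le1-\max\Big(\limsup_{n\to\infty}\frac{\beta_1(x,n)\log(6\lambda+1)+\beta_2(x,n)\log(6\lambda-1)}{\beta_{0,3}(x,n)\log3+\beta_{1,2}(x,n)\log6},\,0\Big),$$ with equality if $x\in\mathcal I$.
   Context: Construction: $F^\lambda_0\equiv0$ on $[0,1]$. Given $F^\lambda_n$ with its $4^n$ closed intervals of generation $n$ (covering $[0,1]$, disjoint interiors, $F^\lambda_n$ affine on each), on each interval $[a,b]$ of generation $n$, with $\ell=b-a$ and slope $m$, $F^\lambda_{n+1}$ coincides with $F^\lambda_n$ at $a,a+\ell/3,a+2\ell/3,b$, equals $F^\lambda_n(a+\ell/2)+\lambda\ell\sqrt{1+m^2}$ at $a+\ell/2$, and is affine on $[a,a+\ell/3],[a+\ell/3,a+\ell/2],[a+\ell/2,a+2\ell/3],[a+2\ell/3,b]$. $F^\lambda=\lim_nF^\lambda_n$. Pointwise exponent: $f\in\mathcal C^\alpha(x_0)$ if there exist a polynomial $P$ of degree at most $\lfloor\alpha\rfloor$ and $C,\delta>0$ with $|f(x)-P(x-x_0)|\le C|x-x_0|^\alpha$ whenever $|x-x_0|<\delta$; $h_f(x_0)=\sup\{\alpha\ge0:f\in\mathcal C^\alpha(x_0)\}$. Dynamics: $T(x)=3x$ on $[0,\frac13)$, $6x-2$ on $[\frac13,\frac12)$, $4-6x$ on $[\frac12,\frac23)$, $3x-2$ on $[\frac23,1]$; $U(x)=0,1,2,3$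 on these intervals; $u_n(x)=U(T^nx)$; $\beta_i(x,n)=\#\{k<n:u_k(x)=i\}$, $\beta_{i,j}=\beta_i+\beta_j$. $\mathcal E$ is the set of $x$ whose digit sequence is eventually constantly $0$ or eventually constantly $3$; for $x\notin\mathcal E$, $m_n(x)$ is the slope of $F^\lambda_n$ at $x$. $\mathcal I$ is the set of $x\in[0,1]\setminus\mathcal E$ with $\lim_{n\to\infty}|m_n(x)|=+\infty$. *)

theory Defs
  imports "HOL-Analysis.Analysis" "HOL-Computational_Algebra.Polynomial"
begin

text \<open>Piecewise affine approximations F_n, represented by their list of nodes
  (breakpoints with values), sorted from 0 to 1.\<close>

fun refine :: "real \<Rightarrow> (real \<times> real) list \<Rightarrow> (real \<times> real) list" where
  "refine lam ((a, ya) # (b, yb) # rest) =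
     (let l = b - a; m = (yb - ya) / l in
       [(a, ya), (a + l / 3, ya + m * l / 3),
        (a + l / 2, ya + m * l / 2 + lam * l * sqrt (1 + m\<^sup>2)),
        (a + 2 * l / 3, ya + m * (2 * l / 3))] @ refine lam ((b, yb) # rest))"
| "refine lam [p] = [p]"
| "refine lam [] = []"

primrec nodes :: "real \<Rightarrow> nat \<Rightarrow> (real \<times> real) list" where
  "nodes lam 0 = [(0, 0), (1, 0)]"
| "nodes lam (Suc n) = refine lam (nodes lam n)"

fun interp :: "(real \<times> real) list \<Rightarrow> real \<Rightarrow> real" where
  "interp ((a, ya) # (b, yb) # rest) x =
     (if x \<le> b then ya + (yb - ya) / (b - a) * (x - a) else interp ((b, yb) # rest) x)"
| "interp [(a, ya)] x = ya"
| "interp [] x = 0"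

definition Fn :: "real \<Rightarrow> nat \<Rightarrow> real \<Rightarrow> real" where
  "Fn lam n x = interp (nodes lam n) x"

definition Flam :: "real \<Rightarrow> real \<Rightarrow> real" where
  "Flam lam x = lim (\<lambda>n. Fn lam n x)"

definition Tmap :: "real \<Rightarrow> real" where
  "Tmap x = (if x < 1/3 then 3 * x else if x < 1/2 then 6 * x - 2
             else if x < 2/3 then 4 - 6 * x else 3 * x - 2)"

definition Udig :: "real \<Rightarrow> nat" where
  "Udig x = (if x < 1/3 then 0 else if x < 1/2 then 1 else if x < 2/3 then 2 else 3)"

definition digit :: "nat \<Rightarrow> real \<Rightarrow> nat" where
  "digit n x = Udig ((Tmap ^^ n) x)"

definition beta :: "nat \<Rightarrow> real \<Rightarrow> nat \<Rightarrow> nat" where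
  "beta i x n = card {k. k < n \<and> digit k x = i}"

definition Eset :: "real set" where
  "Eset = {x. \<exists>N. (\<forall>n\<ge>N. digit n x = 0) \<or> (\<forall>n\<ge>N. digit n x = 3)}"

definition slope :: "real \<Rightarrow> nat \<Rightarrow> real \<Rightarrow> real" where
  "slope lam n x = deriv (Fn lam n) x"

definition Iset :: "real \<Rightarrow> real set" where
  "Iset lam = {x \<in> {0..1} - Eset. filterlim (\<lambda>n. \<bar>slope lam n x\<bar>) at_top sequentially}"

definition pointwise_hoelder :: "(real \<Rightarrow> real) \<Rightarrow> real \<Rightarrow> real \<Rightarrow> bool" where
  "pointwise_hoelder f x0 \<alpha> \<longleftrightarrow>
     (\<exists>P :: real poly. \<exists>C \<delta>. degree P \<le> nat \<lfloor>\<alpha>\<rfloor> \<and> \<delta> > 0 \<and>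
        (\<forall>x. \<bar>x - x0\<bar> < \<delta> \<longrightarrow> \<bar>f x - poly P (x - x0)\<bar> \<le> C * \<bar>x - x0\<bar> powr \<alpha>))"

definition hoelder_exponent :: "(real \<Rightarrow> real) \<Rightarrow> real \<Rightarrow> ereal" where
  "hoelder_exponent f x0 = Sup {ereal \<alpha> | \<alpha>. \<alpha> \<ge> 0 \<and> pointwise_hoelder f x0 \<alpha>}"

definition ratio :: "real \<Rightarrow> real \<Rightarrow> nat \<Rightarrow> real" where
  "ratio lam x n =
     (real (beta 1 x n) * ln (6 * lam + 1) + real (beta 2 x n) * ln (6 * lam - 1)) /
     (real (beta 0 x n + beta 3 x n) * ln 3 + real (beta 1 x n + beta 2 x n) * ln 6)"

end

theory Submission
  imports Defs
begin

datatype st = St (sa: real) (sl: real) (sc: real) (sm: real)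

definition start :: "st \<Rightarrow> real \<times> real" where "start s = (sa s, sc s)"
definition endp :: "st \<Rightarrow> real \<times> real" where "endp s = (sa s + sl s, sc s + sm s * sl s)"
definition sq :: "st \<Rightarrow> real" where "sq s = sqrt (1 + (sm s)\<^sup>2)"

definition child :: "real \<Rightarrow> nat \<Rightarrow> st \<Rightarrow> st" where
  "child lam k s = (let a = sa s; l = sl s; c = sc s; m = sm s in
     if k = 0 then St a (l/3) c m
     else if k = 1 then St (a + l/3) (l/6) (c + m*l/3) (m + 6 * lam * sqrt(1+m\<^sup>2))
     else if k = 2 then St (a + l/2) (l/6) (c + m*l/2 + lam * l * sqrt(1+m\<^sup>2)) (m - 6 * lam * sqrt(1+m\<^sup>2))
     else St (a + 2*l/3) (l/3) (c + m*(2*l/3)) m)"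

definition children :: "real \<Rightarrow> st \<Rightarrow> st list" where
  "children lam s = [child lam 0 s, child lam 1 s, child lam 2 s, child lam 3 s]"

definition root :: st where "root = St 0 1 0 0"

primrec states :: "real \<Rightarrow> nat \<Rightarrow> st list" where
  "states lam 0 = [root]"
| "states lam (Suc n) = concat (map (children lam) (states lam n))"

fun chain :: "st list \<Rightarrow> real \<times> real \<Rightarrow> bool" where
  "chain [] e = True"
| "chain [s] e = (sl s > 0 \<and> endp s = e)"
| "chain (s # s' # r) e = (sl s > 0 \<and> endp s = start s' \<and> chain (s' # r) e)"

lemma refine_chain:
  assumes "chain sts e" "sts \<noteq> []"
  shows "refine lam (map start sts @ [e]) = map start (concat (map (children lam) sts)) @ [e]"
  using assms
proof (induction sts e rule: chain.induct)
  case (2 s e)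
  then show ?case
    by (cases s) (auto simp: start_def endp_def children_def child_def Let_def)
next
  case (3 s s' r e)
  then have IH: "refine lam (map start (s' # r) @ [e]) = map start (concat (map (children lam) (s' # r))) @ [e]"
    by auto
  obtain a l c m where s: "s = St a l c m" by (cases s)
  have sd: "start s' = (a + l, c + m * l)" using 3(2) s by (simp add: endp_def)
  have eq: "map start (s # s' # r) @ [e] = (a, c) # (a + l, c + m*l) # (map start r @ [e])"
    using sd s by (simp add: start_def)
  have eq2: "(a + l, c + m*l) # (map start r @ [e]) = map start (s' # r) @ [e]" using sd by simp
  have "refine lam (map start (s # s' # r) @ [e]) =
     (let l' = a + l - a; m' = (c + m*l - c) / l' in
       [(a, c), (a + l' / 3, c + m' * l' / 3),
        (a + l' / 2, c + m' * l' / 2 + lam * l' * sqrt (1 + m'\<^sup>2)),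
        (a + 2 * l' / 3, c + m' * (2 * l' / 3))] @ refine lam ((a + l, c + m*l) # (map start r @ [e])))"
    unfolding eq by (rule refine.simps(1))
  also have "\<dots> = map start (children lam s) @ refine lam (map start (s' # r) @ [e])"
    unfolding eq2 using 3(2) s by (simp add: Let_def start_def children_def child_def)
  finally show ?case using IH by simp
qed simp

lemma chain_children:
  assumes "chain sts e"
  shows "chain (concat (map (children lam) sts)) e"
  using assms
proof (induction sts e rule: chain.induct)
  case (2 s e)
  then show ?case
    by (cases s) (auto simp: start_def endp_def children_def child_def Let_def field_simps)
next
  case (3 s s' r e)
  have h: "concat (map (children lam) (s # s' # r)) = [child lam 0 s, child lam 1 s, child lam 2 s, child lam 3 s] @ concat (map (children lam) (s' # r))"
    by (simp add: children_def)
  have h2: "concat (map (children lam) (s' # r)) = child lam 0 s' # tl (concat (map (children lam) (s' # r)))"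
    by (simp add: children_def)
  have "chain (concat (map (children lam) (s' # r))) e" using 3 by auto
  then show ?case using 3(2) unfolding h
    apply (subst h2) apply (subst (asm) h2)
    by (cases s; cases s') (auto simp: start_def endp_def children_def child_def Let_def field_simps)
qed simp

lemma chain_states: "chain (states lam n) (1, 0)"
  by (induction n) (auto simp: root_def endp_def chain_children)

lemma states_ne: "states lam n \<noteq> []"
  by (induction n) (auto simp: children_def)

lemma nodes_states: "nodes lam n = map start (states lam n) @ [(1, 0)]"
proof (induction n)
  case 0
  then show ?case by (simp add: root_def start_def)
next
  case (Suc n)
  then show ?case using refine_chain[OF chain_states states_ne] by simp
qed

definition aff :: "st \<Rightarrow> real \<Rightarrow> real" where "aff s t = sc s + sm s * (t - sa s)"
definition inI :: "st \<Rightarrow> real \<Rightarrow> bool" where "inI s t \<longleftrightarrow> sa s \<le> t \<and> t \<le> sa s + sl s"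

lemma chain_tl: "chain (s # rest) e \<Longrightarrow> chain rest e"
  by (cases rest) auto

lemma chain_pos: "chain sts e \<Longrightarrow> st \<in> set sts \<Longrightarrow> sl st > 0"
  by (induction sts e rule: chain.induct) auto

lemma chain_ge: "chain (s # rest) e \<Longrightarrow> st \<in> set rest \<Longrightarrow> sa st \<ge> sa s + sl s"
proof (induction rest arbitrary: s)
  case Nil then show ?case by simp
next
  case (Cons s' r)
  have ss': "sa s' = sa s + sl s" using Cons.prems(1) by (simp add: endp_def start_def)
  have "sl s' > 0" using Cons.prems(1) by (cases r) auto
  show ?case
  proof (cases "st = s'")
    case True then show ?thesis using ss' by simp
  next
    case False
    then have "st \<in> set r" using Cons.prems by simp
    then have "sa st \<ge> sa s' + sl s'" using Cons.IH[of s'] Cons.prems(1) by simp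
    then show ?thesis using ss' \<open>sl s' > 0\<close> by simp
  qed
qed

lemma interp_chain:
  assumes "chain sts e" "st \<in> set sts" "inI st t"
  shows "interp (map start sts @ [e]) t = aff st t"
  using assms
proof (induction sts arbitrary: st)
  case Nil then show ?case by simp
next
  case (Cons s rest)
  obtain a l c m where s: "s = St a l c m" by (cases s)
  have lpos: "l > 0" using Cons.prems(1) s by (cases rest) auto
  have nxt: "map start rest @ [e] = (a + l, c + m * l) # tl (map start rest @ [e])"
    using Cons.prems(1) s by (cases rest) (auto simp: endp_def start_def)
  obtain rr where rr: "map start rest @ [e] = (a + l, c + m * l) # rr" using nxt by blast
  have e1: "map start (s # rest) @ [e] = (a, c) # (map start rest @ [e])" by (simp add: s start_def)
  have step: "interp (map start (s # rest) @ [e]) t =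
      (if t \<le> a + l then c + (c + m * l - c) / (a + l - a) * (t - a) else interp (map start rest @ [e]) t)"
    unfolding e1 rr by (rule interp.simps(1))
  have affs: "c + (c + m * l - c) / (a + l - a) * (t - a) = aff s t"
    using lpos s by (simp add: aff_def)
  show ?case
  proof (cases "st = s")
    case True
    then show ?thesis using Cons.prems(3) step affs by (simp add: inI_def s)
  next
    case False
    then have str: "st \<in> set rest" using Cons.prems(2) by simp
    have ge: "sa st \<ge> a + l" using chain_ge[OF Cons.prems(1) str] s by simp
    have IH: "interp (map start rest @ [e]) t = aff st t"
      using Cons.IH[OF chain_tl[OF Cons.prems(1)] str Cons.prems(3)] .
    show ?thesis
    proof (cases "t \<le> a + l")
      case False then show ?thesis using step IH by simp
    next
      case True
      then have teq: "t = a + l" "sa st = a + l" using ge Cons.prems(3) by (auto simp: inI_def)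
      obtain s1 r1 where r: "rest = s1 # r1" using str by (cases rest) auto
      have s1: "sa s1 = a + l" "sc s1 = c + m * l" using Cons.prems(1) r s by (auto simp: endp_def start_def)
      have "st = s1"
      proof (rule ccontr)
        assume "st \<noteq> s1"
        then have "st \<in> set r1" using str r by simp
        then have "sa st \<ge> sa s1 + sl s1" using chain_ge[of s1 r1 e] chain_tl[OF Cons.prems(1)] r by simp
        moreover have "sl s1 > 0" using chain_pos[OF chain_tl[OF Cons.prems(1)], of s1] r by simp
        ultimately show False using teq s1 by simp
      qed
      then show ?thesis using step affs teq s1 True lpos by (simp add: aff_def s)
    qed
  qed
qed

lemma Fn_aff: "st \<in> set (states lam n) \<Longrightarrow> inI st t \<Longrightarrow> Fn lam n t = aff st t"
  unfolding Fn_def nodes_states by (rule interp_chain[OF chain_states])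



primrec Dset :: "real \<Rightarrow> nat \<Rightarrow> st \<Rightarrow> st set" where
  "Dset lam 0 s = {s}"
| "Dset lam (Suc j) s = (\<Union>s'\<in>Dset lam j s. set (children lam s'))"

lemma set_children: "set (children lam s) = range (\<lambda>k. child lam k s)"
proof -
  have "child lam k s \<in> {child lam 0 s, child lam 1 s, child lam 2 s, child lam 3 s}" for k
    by (cases "k = 0"; cases "k = 1"; cases "k = 2") (auto simp: child_def Let_def)
  then show ?thesis by (auto simp: children_def)
qed

lemma set_states: "set (states lam n) = Dset lam n root"
  by (induction n) auto

lemma Dset_child: "s \<in> Dset lam n r \<Longrightarrow> child lam k s \<in> Dset lam (Suc n) r"
  by (auto simp: set_children)

lemma Dset_trans: "s' \<in> Dset lam j s \<Longrightarrow> s \<in> Dset lam n r \<Longrightarrow> s' \<in> Dset lam (n + j) r"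
proof (induction j arbitrary: s')
  case 0 then show ?case by simp
next
  case (Suc j)
  then obtain s'' where "s'' \<in> Dset lam j s" "s' \<in> set (children lam s'')" by auto
  then show ?case using Suc.IH[of s''] Suc.prems(2) by auto
qed

definition Lh :: "st \<Rightarrow> real" where "Lh s = sl s * sq s"

lemma sq_ge1: "sq s \<ge> 1"
  unfolding sq_def by simp

lemma sq_ge_abs: "\<bar>sm s\<bar> \<le> sq s"
  unfolding sq_def by (simp add: real_le_rsqrt abs_le_square_iff power2_eq_square)

lemma sqrt_shift:
  fixes m e :: real
  shows "sqrt (1 + (m + e)\<^sup>2) \<le> sqrt (1 + m\<^sup>2) + \<bar>e\<bar>"
proof -
  have m: "\<bar>m\<bar> \<le> sqrt (1 + m\<^sup>2)" by (simp add: real_le_rsqrt abs_le_square_iff power2_eq_square)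
  have me: "m * e \<le> \<bar>m\<bar> * \<bar>e\<bar>" by (metis abs_ge_self abs_mult)
  have "\<bar>m\<bar> * \<bar>e\<bar> \<le> sqrt (1 + m\<^sup>2) * \<bar>e\<bar>" by (rule mult_right_mono[OF m]) simp
  then have "1 + (m + e)\<^sup>2 \<le> (sqrt (1 + m\<^sup>2) + \<bar>e\<bar>)\<^sup>2"
    using me by (simp add: power2_eq_square algebra_simps)
  then have "sqrt (1 + (m + e)\<^sup>2) \<le> sqrt ((sqrt (1 + m\<^sup>2) + \<bar>e\<bar>)\<^sup>2)"
    by (rule real_sqrt_le_mono)
  also have "\<dots> = sqrt (1 + m\<^sup>2) + \<bar>e\<bar>" by simp
  finally show ?thesis .
qed

definition rho :: "real \<Rightarrow> real" where "rho lam = max (1/3) ((1 + 6 * lam) / 6)"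

lemma child_sq: "lam > 0 \<Longrightarrow> sq (child lam k s) \<le> (1 + 6 * lam) * sq s"
proof -
  assume lam: "lam > 0"
  have b1: "sqrt (1 + (sm s + 6 * lam * sq s)\<^sup>2) \<le> (1 + 6 * lam) * sq s"
    using sqrt_shift[of "sm s" "6 * lam * sq s"] lam sq_ge1[of s]
    by (simp add: sq_def algebra_simps abs_mult)
  have b2: "sqrt (1 + (sm s - 6 * lam * sq s)\<^sup>2) \<le> (1 + 6 * lam) * sq s"
    using sqrt_shift[of "sm s" "- 6 * lam * sq s"] lam sq_ge1[of s]
    by (simp add: sq_def algebra_simps abs_mult)
  have b0: "sq s \<le> (1 + 6 * lam) * sq s" using lam sq_ge1[of s] by simp
  show ?thesis using b0 b1 b2
    by (auto simp: child_def Let_def sq_def)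
qed

lemma child_basic:
  assumes "sl s > 0" "lam > 0"
  shows "sl (child lam k s) > 0"
    and "inI (child lam k s) t \<Longrightarrow> inI s t"
    and "inI (child lam k s) t \<Longrightarrow> \<bar>aff (child lam k s) t - aff s t\<bar> \<le> lam * Lh s"
    and "Lh (child lam k s) \<le> rho lam * Lh s"
proof -
  let ?a = "sa s" and ?l = "sl s" and ?c = "sc s" and ?m = "sm s"
  have sqd: "sqrt (1 + (sm s)\<^sup>2) = sq s" by (simp add: sq_def)
  show "sl (child lam k s) > 0" using assms by (auto simp: child_def Let_def)
  show "inI (child lam k s) t \<Longrightarrow> inI s t" using assms
    by (cases "k = 0"; cases "k = 1"; cases "k = 2") (auto simp: child_def Let_def inI_def)
  show "inI (child lam k s) t \<Longrightarrow> \<bar>aff (child lam k s) t - aff s t\<bar> \<le> lam * Lh s"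
  proof -
    assume h: "inI (child lam k s) t"
    have sq0: "sq s \<ge> 1" by (rule sq_ge1)
    consider "k = 0" | "k = 1" | "k = 2" | "k \<noteq> 0 \<and> k \<noteq> 1 \<and> k \<noteq> 2" by blast
    then show ?thesis
    proof cases
      case 1 then show ?thesis using assms sq0 by (simp add: child_def aff_def Lh_def)
    next
      case 2
      then have t: "sa s + sl s / 3 \<le> t" "t \<le> sa s + sl s / 3 + sl s / 6"
        using h by (auto simp: child_def Let_def inI_def)
      have e: "aff (child lam k s) t - aff s t = 6 * lam * sq s * (t - sa s - sl s / 3)"
        using 2 by (simp add: child_def Let_def aff_def sqd algebra_simps)
      have p: "0 \<le> 6 * lam * sq s * (t - sa s - sl s / 3)" using t assms sq0 by simp
      have q: "6 * lam * sq s * (t - sa s - sl s / 3) \<le> 6 * lam * sq s * (sl s / 6)"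
        using t assms sq0 by (intro mult_left_mono) auto
      have r: "6 * lam * sq s * (sl s / 6) = lam * (sl s * sq s)" by simp
      show ?thesis unfolding Lh_def abs_le_iff e using p q r by linarith
    next
      case 3
      then have t: "sa s + sl s / 2 \<le> t" "t \<le> sa s + sl s / 2 + sl s / 6"
        using h by (auto simp: child_def Let_def inI_def)
      have e: "aff (child lam k s) t - aff s t = lam * sl s * sq s - 6 * lam * sq s * (t - sa s - sl s / 2)"
        using 3 by (simp add: child_def Let_def aff_def sqd algebra_simps)
      have p: "0 \<le> 6 * lam * sq s * (t - sa s - sl s / 2)" using t assms sq0 by simp
      have q: "6 * lam * sq s * (t - sa s - sl s / 2) \<le> 6 * lam * sq s * (sl s / 6)"
        using t assms sq0 by (intro mult_left_mono) auto
      have r: "6 * lam * sq s * (sl s / 6) = lam * (sl s * sq s)" "lam * sl s * sq s = lam * (sl s * sq s)" by simp_all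
      show ?thesis unfolding Lh_def abs_le_iff e using p q r by linarith
    next
      case 4
      then have "aff (child lam k s) t - aff s t = 0"
        by (simp add: child_def Let_def aff_def algebra_simps)
      then show ?thesis using assms sq0 by (simp add: Lh_def)
    qed
  qed
  show "Lh (child lam k s) \<le> rho lam * Lh s"
  proof -
    have sq0: "sq s \<ge> 1" by (rule sq_ge1)
    have r1: "1/3 \<le> rho lam" "(1 + 6 * lam) / 6 \<le> rho lam" by (auto simp: rho_def)
    have b1: "sqrt (1 + (sm s + 6 * lam * sq s)\<^sup>2) \<le> (1 + 6 * lam) * sq s"
      using sqrt_shift[of "sm s" "6 * lam * sq s"] assms sq0
      by (simp add: sq_def algebra_simps abs_mult)
    have b2: "sqrt (1 + (sm s - 6 * lam * sq s)\<^sup>2) \<le> (1 + 6 * lam) * sq s"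
      using sqrt_shift[of "sm s" "- 6 * lam * sq s"] assms sq0
      by (simp add: sq_def algebra_simps abs_mult)
    have A: "sl s / 3 * sq s \<le> rho lam * (sl s * sq s)"
      using r1 assms sq0 mult_right_mono[OF r1(1), of "sl s * sq s"] by simp
    have B: "sl s / 6 * ((1 + 6 * lam) * sq s) \<le> rho lam * (sl s * sq s)"
      using r1 assms sq0 mult_right_mono[OF r1(2), of "sl s * sq s"] by (simp add: algebra_simps)
    have B1: "sl s / 6 * sqrt (1 + (sm s + 6 * lam * sq s)\<^sup>2) \<le> rho lam * (sl s * sq s)"
      using B mult_left_mono[OF b1, of "sl s / 6"] assms by simp
    have B2: "sl s / 6 * sqrt (1 + (sm s - 6 * lam * sq s)\<^sup>2) \<le> rho lam * (sl s * sq s)"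
      using B mult_left_mono[OF b2, of "sl s / 6"] assms by simp
    show ?thesis using A B1 B2
      by (auto simp: child_def Let_def Lh_def sq_def)
  qed
qed

lemma child_cover: "inI s t \<Longrightarrow> \<exists>k. inI (child lam k s) t"
proof -
  assume h: "inI s t"
  have "t \<le> sa s + sl s / 3 \<or> (sa s + sl s / 3 \<le> t \<and> t \<le> sa s + sl s / 2) \<or>
        (sa s + sl s / 2 \<le> t \<and> t \<le> sa s + 2 * sl s / 3) \<or> sa s + 2 * sl s / 3 \<le> t" by linarith
  then show ?thesis using h
    apply (elim disjE)
    apply (rule exI[of _ 0]; simp add: child_def inI_def Let_def)
    apply (rule exI[of _ 1]; simp add: child_def inI_def Let_def)
    apply (rule exI[of _ 2]; simp add: child_def inI_def Let_def)
    apply (rule exI[of _ 3]; simp add: child_def inI_def Let_def)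
    done
qed



lemma rho_pos: "rho lam > 0" by (simp add: rho_def)
lemma rho_lt1: "lam < 5/6 \<Longrightarrow> rho lam < 1" by (simp add: rho_def)

lemma desc_facts:
  assumes "sl s > 0" "lam > 0" "s' \<in> Dset lam j s"
  shows "sl s' > 0 \<and> (\<forall>t. inI s' t \<longrightarrow> inI s t) \<and> Lh s' \<le> rho lam ^ j * Lh s \<and>
         (\<forall>t. inI s' t \<longrightarrow> \<bar>aff s' t - aff s t\<bar> \<le> lam * Lh s * (\<Sum>i<j. rho lam ^ i))"
  using assms(3)
proof (induction j arbitrary: s')
  case 0 then show ?case using assms by simp
next
  case (Suc j)
  then obtain s'' k where s'': "s'' \<in> Dset lam j s" "s' = child lam k s''"
    by (auto simp: set_children)
  note IH = Suc.IH[OF s''(1)]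
  have slp: "sl s'' > 0" using IH by simp
  note cb = child_basic[OF slp assms(2), of k]
  have Lh0: "Lh s \<ge> 0" using assms sq_ge1[of s] by (simp add: Lh_def)
  have L1: "Lh s' \<le> rho lam ^ Suc j * Lh s"
  proof -
    have "Lh s' \<le> rho lam * Lh s''" using cb s'' by simp
    also have "\<dots> \<le> rho lam * (rho lam ^ j * Lh s)" using IH rho_pos[of lam]
      by (intro mult_left_mono) auto
    finally show ?thesis by simp
  qed
  have A: "\<bar>aff s' t - aff s t\<bar> \<le> lam * Lh s * (\<Sum>i<Suc j. rho lam ^ i)" if t: "inI s' t" for t
  proof -
    have t'': "inI s'' t" using cb(2) t s'' by simp
    have "\<bar>aff s' t - aff s t\<bar> \<le> \<bar>aff s' t - aff s'' t\<bar> + \<bar>aff s'' t - aff s t\<bar>" by simp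
    also have "\<dots> \<le> lam * Lh s'' + lam * Lh s * (\<Sum>i<j. rho lam ^ i)"
      using cb(3) t s'' IH t'' by (intro add_mono) auto
    also have "lam * Lh s'' \<le> lam * (rho lam ^ j * Lh s)" using IH assms(2)
      by (intro mult_left_mono) auto
    finally show ?thesis by (simp add: algebra_simps)
  qed
  show ?case using cb s'' IH L1 A by auto
qed

lemma cover_desc: "inI s t \<Longrightarrow> \<exists>s'\<in>Dset lam j s. inI s' t"
proof (induction j)
  case 0 then show ?case by simp
next
  case (Suc j)
  then obtain s' where "s' \<in> Dset lam j s" "inI s' t" by auto
  moreover obtain k where "inI (child lam k s') t" using child_cover[OF \<open>inI s' t\<close>] by blast
  ultimately show ?case by (auto simp: set_children)
qed

definition Kc :: "real \<Rightarrow> real" where "Kc lam = lam / (1 - rho lam)"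

lemma geo_bound: "lam < 5/6 \<Longrightarrow> (\<Sum>i<j. rho lam ^ i) \<le> 1 / (1 - rho lam)"
proof -
  assume l: "lam < 5/6"
  have r: "0 < rho lam" "rho lam < 1" using rho_pos rho_lt1[OF l] by auto
  have "(\<Sum>i<j. rho lam ^ i) = (1 - rho lam ^ j) / (1 - rho lam)"
    using r by (simp add: sum_gp_strict)
  also have "\<dots> \<le> 1 / (1 - rho lam)" using r by (intro divide_right_mono) auto
  finally show ?thesis .
qed

lemma desc_aff:
  assumes lam: "0 < lam" "lam < 5/6" and "sl s > 0" "s' \<in> Dset lam j s" "inI s' t"
  shows "\<bar>aff s' t - aff s t\<bar> \<le> Kc lam * Lh s"
proof -
  have Lh0: "Lh s \<ge> 0" using assms sq_ge1[of s] by (simp add: Lh_def)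
  have "\<bar>aff s' t - aff s t\<bar> \<le> lam * Lh s * (\<Sum>i<j. rho lam ^ i)"
    using desc_facts[OF assms(3) lam(1) assms(4)] assms(5) by blast
  also have "\<dots> \<le> lam * Lh s * (1 / (1 - rho lam))"
    using geo_bound[OF lam(2)] lam Lh0 by (intro mult_left_mono) auto
  finally show ?thesis by (simp add: Kc_def)
qed

lemma root_facts: "sl root = 1" "Lh root = 1" "sa root = 0" "sc root = 0" "sm root = 0"
  by (auto simp: root_def Lh_def sq_def)

lemma tree_facts:
  assumes "lam > 0" "s \<in> Dset lam n root"
  shows "sl s > 0" "Lh s \<le> rho lam ^ n" "inI s t \<Longrightarrow> inI root t"
  using desc_facts[OF _ assms(1) assms(2)] root_facts by auto

lemma Fn_tree: "s \<in> Dset lam n root \<Longrightarrow> inI s t \<Longrightarrow> Fn lam n t = aff s t"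
  using Fn_aff set_states by blast

lemma Fn_near:
  assumes lam: "0 < lam" "lam < 5/6" and s: "s \<in> Dset lam n root" "inI s t"
  shows "\<bar>Fn lam (n + j) t - aff s t\<bar> \<le> Kc lam * Lh s"
proof -
  obtain s' where s': "s' \<in> Dset lam j s" "inI s' t" using cover_desc[OF s(2)] by blast
  have "s' \<in> Dset lam (n + j) root" using Dset_trans[OF s'(1) s(1)] .
  then have "Fn lam (n + j) t = aff s' t" using Fn_tree s'(2) by blast
  then show ?thesis using desc_aff[OF lam tree_facts(1)[OF lam(1) s(1)] s'] by simp
qed

lemma Kc_pos: "0 < lam \<Longrightarrow> lam < 5/6 \<Longrightarrow> Kc lam > 0"
  using rho_lt1 by (simp add: Kc_def)

lemma Fn_conv:
  assumes lam: "0 < lam" "lam < 5/6" and t: "inI root t"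
  shows "(\<lambda>k. Fn lam k t) \<longlonglongrightarrow> Flam lam t"
proof -
  have r: "0 < rho lam" "rho lam < 1" using rho_pos rho_lt1[OF lam(2)] by auto
  have K: "Kc lam > 0" using Kc_pos lam by simp
  have "Cauchy (\<lambda>k. Fn lam k t)"
  proof (rule CauchyI)
    fix e :: real assume e: "e > 0"
    obtain N where N: "rho lam ^ N < e / (2 * Kc lam)"
      using real_arch_pow_inv[of "e / (2 * Kc lam)" "rho lam"] e K r by auto
    obtain s where s: "s \<in> Dset lam N root" "inI s t" using cover_desc[OF t] by blast
    have LhN: "Lh s \<le> rho lam ^ N" using tree_facts[OF lam(1) s(1)] by simp
    have b: "\<bar>Fn lam m t - aff s t\<bar> \<le> Kc lam * rho lam ^ N" if "m \<ge> N" for m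
    proof -
      have "\<bar>Fn lam (N + (m - N)) t - aff s t\<bar> \<le> Kc lam * Lh s" by (rule Fn_near[OF lam s])
      also have "\<dots> \<le> Kc lam * rho lam ^ N" using LhN K by (intro mult_left_mono) auto
      finally show ?thesis using that by simp
    qed
    have "Kc lam * rho lam ^ N < e / 2" using N K by (simp add: field_simps)
    then show "\<exists>M. \<forall>m\<ge>M. \<forall>n\<ge>M. norm (Fn lam m t - Fn lam n t) < e"
    proof (intro exI[of _ N] allI impI)
      fix m n assume mn: "m \<ge> N" "n \<ge> N"
      have "\<bar>Fn lam m t - aff s t\<bar> \<le> Kc lam * rho lam ^ N" "\<bar>Fn lam n t - aff s t\<bar> \<le> Kc lam * rho lam ^ N"
        using b mn by auto
      then show "norm (Fn lam m t - Fn lam n t) < e" using \<open>Kc lam * rho lam ^ N < e / 2\<close> by simp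
    qed
  qed
  then show ?thesis
    unfolding Flam_def using Cauchy_convergent_iff convergent_LIMSEQ_iff by blast
qed

lemma F_bound:
  assumes lam: "0 < lam" "lam < 5/6" and s: "s \<in> Dset lam n root" "inI s t"
  shows "\<bar>Flam lam t - aff s t\<bar> \<le> Kc lam * Lh s"
proof -
  have t: "inI root t" using tree_facts(3)[OF lam(1) s] .
  have "(\<lambda>j. Fn lam (j + n) t) \<longlonglongrightarrow> Flam lam t"
    using Fn_conv[OF lam t] LIMSEQ_ignore_initial_segment by blast
  then have "(\<lambda>j. \<bar>Fn lam (j + n) t - aff s t\<bar>) \<longlonglongrightarrow> \<bar>Flam lam t - aff s t\<bar>"
    by (intro tendsto_intros)
  then show ?thesis
    by (rule LIMSEQ_le_const2) (use Fn_near[OF lam s] in \<open>auto simp: add.commute\<close>)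
qed



lemma ch0_iter: "(child lam 0 ^^ r) s = St (sa s) (sl s / 3^r) (sc s) (sm s)"
  by (induction r) (auto simp: child_def Let_def)

lemma ch3_iter: "(child lam 3 ^^ r) s = St (sa s + sl s - sl s / 3^r) (sl s / 3^r) (sc s + sm s * (sl s - sl s / 3^r)) (sm s)"
  by (induction r) (auto simp: child_def Let_def field_simps)

lemma iter_tree: "s \<in> Dset lam n root \<Longrightarrow> (child lam k ^^ r) s \<in> Dset lam (n + r) root"
  by (induction r) (auto simp: set_children)

lemma exists_step: "P (0::nat) \<Longrightarrow> \<not> P n \<Longrightarrow> \<exists>r. P r \<and> \<not> P (Suc r)"
  by (induction n) auto

lemma small_nonpos:
  fixes x A :: real
  assumes "\<And>r::nat. x \<le> A / 3^r"
  shows "x \<le> 0"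
proof (rule ccontr)
  assume x: "\<not> x \<le> 0"
  have A: "A > 0" using assms[of 0] x by simp
  obtain r where r: "(1/3::real)^r < x / A" using real_arch_pow_inv[of "x/A" "1/3"] x A by auto
  have "A / 3^r = A * (1/3)^r" by (simp add: power_divide)
  also have "\<dots> < A * (x / A)" using r A by (intro mult_strict_left_mono) auto
  also have "\<dots> = x" using A by simp
  finally show False using assms[of r] by simp
qed

lemma sq_iter: "sq (St a l c (sm s)) = sq s" by (simp add: sq_def)

lemma bdry_left:
  assumes lam: "0 < lam" "lam < 5/6" and s: "s \<in> Dset lam n root" "inI s t"
  shows "Flam lam (sa s) = sc s"
    and "\<bar>Flam lam t - sc s\<bar> \<le> (1 + 3 * Kc lam) * sq s * (t - sa s)"
proof -
  have K: "Kc lam > 0" using Kc_pos lam by simp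
  have lp: "sl s > 0" using tree_facts[OF lam(1) s(1)] by simp
  let ?c = "\<lambda>r. (child lam 0 ^^ r) s"
  have ct: "?c r \<in> Dset lam (n + r) root" for r using iter_tree[OF s(1)] .
  have cfm: "?c r = St (sa s) (sl s / 3^r) (sc s) (sm s)" for r by (rule ch0_iter)
  have Fb: "\<bar>Flam lam u - (sc s + sm s * (u - sa s))\<bar> \<le> Kc lam * (sl s / 3^r * sq s)"
    if "sa s \<le> u" "u \<le> sa s + sl s / 3^r" for u r
    using F_bound[OF lam ct[of r], of u] that by (simp add: cfm inI_def aff_def Lh_def sq_def)
  have "\<bar>Flam lam (sa s) - sc s\<bar> \<le> (Kc lam * sl s * sq s) / 3^r" for r
    using Fb[of "sa s" r] lp by simp
  then have "\<bar>Flam lam (sa s) - sc s\<bar> \<le> 0" by (rule small_nonpos)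
  then show F0: "Flam lam (sa s) = sc s" by simp
  show "\<bar>Flam lam t - sc s\<bar> \<le> (1 + 3 * Kc lam) * sq s * (t - sa s)"
  proof (cases "t = sa s")
    case True then show ?thesis using F0 by simp
  next
    case False
    then have tp: "t > sa s" using s(2) by (simp add: inI_def)
    obtain r0 where r0: "(1/3::real)^r0 < (t - sa s) / sl s"
      using real_arch_pow_inv[of "(t - sa s) / sl s" "1/3"] tp lp by auto
    have "\<not> t \<le> sa s + sl s / 3^r0"
    proof
      assume "t \<le> sa s + sl s / 3^r0"
      moreover have "sl s / 3^r0 = sl s * (1/3)^r0" by (simp add: power_divide)
      moreover have "sl s * (1/3)^r0 < sl s * ((t - sa s) / sl s)" using mult_strict_left_mono[OF r0 lp] .
      ultimately show False using lp by simp
    qed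
    then obtain r where r: "t \<le> sa s + sl s / 3^r" "\<not> t \<le> sa s + sl s / 3^Suc r"
      using exists_step[of "\<lambda>r. t \<le> sa s + sl s / 3^r"] s(2) by (auto simp: inI_def)
    have b1: "\<bar>Flam lam t - (sc s + sm s * (t - sa s))\<bar> \<le> Kc lam * (sl s / 3^r * sq s)"
      using Fb[OF less_imp_le[OF tp] r(1)] .
    have "sl s / 3^r = 3 * (sl s / 3^Suc r)" by simp
    then have "sl s / 3^r < 3 * (t - sa s)" using r(2) by simp
    then have "(Kc lam * sq s) * (sl s / 3^r) \<le> (Kc lam * sq s) * (3 * (t - sa s))"
      using K sq_ge1[of s] by (intro mult_left_mono) auto
    then have b2: "Kc lam * (sl s / 3^r * sq s) \<le> 3 * Kc lam * sq s * (t - sa s)"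
      by (simp add: algebra_simps)
    have b3: "\<bar>sm s * (t - sa s)\<bar> \<le> sq s * (t - sa s)"
      using sq_ge_abs[of s] tp by (simp add: abs_mult mult_right_mono)
    show ?thesis using b1 b2 b3 by (simp add: algebra_simps abs_le_iff) linarith
  qed
qed

lemma bdry_right:
  assumes lam: "0 < lam" "lam < 5/6" and s: "s \<in> Dset lam n root" "inI s t"
  shows "Flam lam (sa s + sl s) = sc s + sm s * sl s"
    and "\<bar>Flam lam t - (sc s + sm s * sl s)\<bar> \<le> (1 + 3 * Kc lam) * sq s * (sa s + sl s - t)"
proof -
  have K: "Kc lam > 0" using Kc_pos lam by simp
  have lp: "sl s > 0" using tree_facts[OF lam(1) s(1)] by simp
  let ?c = "\<lambda>r. (child lam 3 ^^ r) s"
  let ?b = "sa s + sl s" and ?v = "sc s + sm s * sl s"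
  have ct: "?c r \<in> Dset lam (n + r) root" for r using iter_tree[OF s(1)] .
  have cfm: "?c r = St (sa s + sl s - sl s / 3^r) (sl s / 3^r) (sc s + sm s * (sl s - sl s / 3^r)) (sm s)" for r
    by (rule ch3_iter)
  have Fb: "\<bar>Flam lam u - (?v - sm s * (?b - u))\<bar> \<le> Kc lam * (sl s / 3^r * sq s)"
    if "?b - sl s / 3^r \<le> u" "u \<le> ?b" for u r
  proof -
    have "\<bar>Flam lam u - aff (?c r) u\<bar> \<le> Kc lam * Lh (?c r)"
      using F_bound[OF lam ct[of r], of u] that by (simp add: cfm inI_def)
    moreover have "aff (?c r) u = ?v - sm s * (?b - u)" by (simp add: cfm aff_def algebra_simps)
    moreover have "Lh (?c r) = sl s / 3^r * sq s" by (simp add: cfm Lh_def sq_def)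
    ultimately show ?thesis by simp
  qed
  have "\<bar>Flam lam ?b - ?v\<bar> \<le> (Kc lam * sl s * sq s) / 3^r" for r
    using Fb[of r ?b] lp by simp
  then have "\<bar>Flam lam ?b - ?v\<bar> \<le> 0" by (rule small_nonpos)
  then show F0: "Flam lam ?b = ?v" by simp
  show "\<bar>Flam lam t - ?v\<bar> \<le> (1 + 3 * Kc lam) * sq s * (?b - t)"
  proof (cases "t = ?b")
    case True then show ?thesis using F0 by simp
  next
    case False
    then have tp: "t < ?b" using s(2) by (simp add: inI_def)
    obtain r0 where r0: "(1/3::real)^r0 < (?b - t) / sl s"
      using real_arch_pow_inv[of "(?b - t) / sl s" "1/3"] tp lp by auto
    have "\<not> ?b - sl s / 3^r0 \<le> t"
    proof
      assume "?b - sl s / 3^r0 \<le> t"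
      moreover have "sl s / 3^r0 = sl s * (1/3)^r0" by (simp add: power_divide)
      moreover have "sl s * (1/3)^r0 < sl s * ((?b - t) / sl s)" using mult_strict_left_mono[OF r0 lp] .
      ultimately show False using lp by simp
    qed
    then obtain r where r: "?b - sl s / 3^r \<le> t" "\<not> ?b - sl s / 3^Suc r \<le> t"
      using exists_step[of "\<lambda>r. ?b - sl s / 3^r \<le> t"] s(2) by (auto simp: inI_def)
    have b1: "\<bar>Flam lam t - (?v - sm s * (?b - t))\<bar> \<le> Kc lam * (sl s / 3^r * sq s)"
      using Fb[OF r(1) less_imp_le[OF tp]] .
    have "sl s / 3^r = 3 * (sl s / 3^Suc r)" by simp
    then have "sl s / 3^r < 3 * (?b - t)" using r(2) by simp
    then have "(Kc lam * sq s) * (sl s / 3^r) \<le> (Kc lam * sq s) * (3 * (?b - t))"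
      using K sq_ge1[of s] by (intro mult_left_mono) auto
    then have b2: "Kc lam * (sl s / 3^r * sq s) \<le> 3 * Kc lam * sq s * (?b - t)"
      by (simp add: algebra_simps)
    have b3: "\<bar>sm s * (?b - t)\<bar> \<le> sq s * (?b - t)"
      using sq_ge_abs[of s] tp by (simp add: abs_mult mult_right_mono)
    have "\<bar>Flam lam t - ?v\<bar> \<le> \<bar>Flam lam t - (?v - sm s * (?b - t))\<bar> + \<bar>sm s * (?b - t)\<bar>" by linarith
    also have "\<dots> \<le> 3 * Kc lam * sq s * (?b - t) + sq s * (?b - t)" using b1 b2 b3 by linarith
    also have "\<dots> = (1 + 3 * Kc lam) * sq s * (?b - t)" by (simp add: algebra_simps)
    finally show ?thesis .
  qed
qed



lemma child_sep:
  assumes "i < j" "j \<le> 3" "sl s > 0"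
  shows "sa (child lam i s) + sl (child lam i s) \<le> sa (child lam j s) \<and>
    (sa (child lam i s) + sl (child lam i s) = sa (child lam j s) \<or>
     sl s / 6 \<le> sa (child lam j s) - (sa (child lam i s) + sl (child lam i s)))"
proof -
  have "(i = 0 \<and> j = 1) \<or> (i = 0 \<and> j = 2) \<or> (i = 0 \<and> j = 3) \<or> (i = 1 \<and> j = 2) \<or> (i = 1 \<and> j = 3) \<or> (i = 2 \<and> j = 3)"
    using assms by linarith
  then show ?thesis using assms by (elim disjE) (auto simp: child_def Let_def)
qed

definition C2 :: "real \<Rightarrow> real" where "C2 lam = (1 + 6 * lam) * (1 + 3 * Kc lam) + 1 + 12 * Kc lam"

lemma pair_bound:
  assumes lam: "0 < lam" "lam < 5/6" and s: "s \<in> Dset lam n root"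
    and ij: "i < j" "j \<le> 3" and u: "inI (child lam i s) u" and v: "inI (child lam j s) v"
  shows "\<bar>Flam lam v - Flam lam u\<bar> \<le> C2 lam * sq s * (v - u)"
proof -
  let ?ci = "child lam i s" and ?cj = "child lam j s"
  let ?e = "sa ?ci + sl ?ci" and ?g = "sa ?cj"
  let ?F = "Flam lam"
  have K: "Kc lam > 0" using Kc_pos lam by simp
  have lp: "sl s > 0" using tree_facts[OF lam(1) s] by simp
  have ci: "?ci \<in> Dset lam (Suc n) root" and cj: "?cj \<in> Dset lam (Suc n) root"
    using Dset_child[OF s] by auto
  have sep: "?e \<le> ?g" "?e = ?g \<or> sl s / 6 \<le> ?g - ?e" using child_sep[OF ij lp, of lam] by auto
  have ue: "u \<le> ?e" using u by (simp add: inI_def)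
  have gv: "?g \<le> v" using v by (simp add: inI_def)
  have sqi: "sq ?ci \<le> (1 + 6 * lam) * sq s" "sq ?cj \<le> (1 + 6 * lam) * sq s"
    using child_sq lam by auto
  have sq1: "sq s \<ge> 1" by (rule sq_ge1)
  have A0: "0 \<le> (1 + 3 * Kc lam)" using K by simp
  have t1: "\<bar>?F u - ?F ?e\<bar> \<le> (1 + 3 * Kc lam) * ((1 + 6 * lam) * sq s) * (?e - u)"
  proof -
    have "\<bar>?F u - ?F ?e\<bar> \<le> (1 + 3 * Kc lam) * sq ?ci * (?e - u)"
      using bdry_right[OF lam ci u] by simp
    also have "\<dots> \<le> (1 + 3 * Kc lam) * ((1 + 6 * lam) * sq s) * (?e - u)"
      using sqi A0 ue by (intro mult_right_mono mult_left_mono) auto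
    finally show ?thesis .
  qed
  have t2: "\<bar>?F v - ?F ?g\<bar> \<le> (1 + 3 * Kc lam) * ((1 + 6 * lam) * sq s) * (v - ?g)"
  proof -
    have "\<bar>?F v - ?F ?g\<bar> \<le> (1 + 3 * Kc lam) * sq ?cj * (v - ?g)"
      using bdry_left[OF lam cj v] by simp
    also have "\<dots> \<le> (1 + 3 * Kc lam) * ((1 + 6 * lam) * sq s) * (v - ?g)"
      using sqi A0 gv by (intro mult_right_mono mult_left_mono) auto
    finally show ?thesis .
  qed
  have t3: "\<bar>?F ?g - ?F ?e\<bar> \<le> (1 + 12 * Kc lam) * sq s * (?g - ?e)"
  proof (cases "?e = ?g")
    case True then show ?thesis by simp
  next
    case False
    then have gap: "sl s / 6 \<le> ?g - ?e" using sep by auto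
    have ein: "inI s ?e" using child_basic(2)[OF lp lam(1), of i] u by (auto simp: inI_def)
    have gin: "inI s ?g" using child_basic(2)[OF lp lam(1), of j] v by (auto simp: inI_def)
    have "\<bar>?F ?g - ?F ?e\<bar> \<le> \<bar>?F ?g - aff s ?g\<bar> + \<bar>?F ?e - aff s ?e\<bar> + \<bar>aff s ?g - aff s ?e\<bar>"
      by linarith
    also have "\<dots> \<le> Kc lam * Lh s + Kc lam * Lh s + sq s * (?g - ?e)"
    proof -
      have "aff s ?g - aff s ?e = sm s * (?g - ?e)" by (simp add: aff_def algebra_simps)
      then have "\<bar>aff s ?g - aff s ?e\<bar> = \<bar>sm s\<bar> * (?g - ?e)" using sep
        by (simp add: abs_mult)
      also have "\<dots> \<le> sq s * (?g - ?e)" using sq_ge_abs[of s] sep by (intro mult_right_mono) auto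
      finally show ?thesis using F_bound[OF lam s ein] F_bound[OF lam s gin] by linarith
    qed
    also have "Kc lam * Lh s \<le> 6 * Kc lam * sq s * (?g - ?e)"
    proof -
      have "Kc lam * sq s * sl s \<le> Kc lam * sq s * (6 * (?g - ?e))"
        using gap K sq1 by (intro mult_left_mono) auto
      then show ?thesis by (simp add: Lh_def algebra_simps)
    qed
    finally show ?thesis by (simp add: algebra_simps)
  qed
  have "\<bar>?F v - ?F u\<bar> \<le> \<bar>?F v - ?F ?g\<bar> + \<bar>?F ?g - ?F ?e\<bar> + \<bar>?F u - ?F ?e\<bar>" by linarith
  also have "\<dots> \<le> (1 + 3 * Kc lam) * ((1 + 6 * lam) * sq s) * (v - ?g) + (1 + 12 * Kc lam) * sq s * (?g - ?e)
      + (1 + 3 * Kc lam) * ((1 + 6 * lam) * sq s) * (?e - u)"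
    using t1 t2 t3 by linarith
  also have "\<dots> \<le> C2 lam * sq s * (v - ?g) + C2 lam * sq s * (?g - ?e) + C2 lam * sq s * (?e - u)"
  proof -
    have c1: "(1 + 3 * Kc lam) * (1 + 6 * lam) \<le> C2 lam" "1 + 12 * Kc lam \<le> C2 lam"
      using K lam by (auto simp: C2_def)
    have "(1 + 3 * Kc lam) * ((1 + 6 * lam) * sq s) * (v - ?g) \<le> C2 lam * sq s * (v - ?g)"
      using c1 sq1 gv by (simp add: mult.assoc[symmetric] mult_right_mono)
    moreover have "(1 + 3 * Kc lam) * ((1 + 6 * lam) * sq s) * (?e - u) \<le> C2 lam * sq s * (?e - u)"
      using c1 sq1 ue by (simp add: mult.assoc[symmetric] mult_right_mono)
    moreover have "(1 + 12 * Kc lam) * sq s * (?g - ?e) \<le> C2 lam * sq s * (?g - ?e)"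
      using c1 sq1 sep by (simp add: mult_right_mono)
    ultimately show ?thesis by linarith
  qed
  also have "\<dots> = C2 lam * sq s * (v - u)" by (simp add: algebra_simps)
  finally show ?thesis .
qed



primrec cpath :: "real \<Rightarrow> real \<Rightarrow> nat \<Rightarrow> st \<times> bool" where
  "cpath lam x 0 = (root, True)"
| "cpath lam x (Suc n) = (let s = fst (cpath lam x n); ori = snd (cpath lam x n); d = digit n x in
     (child lam (if ori then d else 3 - d) s, if d = 2 then \<not> ori else ori))"

definition pos :: "st \<Rightarrow> bool \<Rightarrow> real \<Rightarrow> real" where
  "pos s ori x = (if ori then (x - sa s) / sl s else (sa s + sl s - x) / sl s)"

lemma pos_range: "sl s > 0 \<Longrightarrow> inI s x \<Longrightarrow> 0 \<le> pos s ori x \<and> pos s ori x \<le> 1"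
  by (auto simp: pos_def inI_def divide_simps)

lemma step_geo:
  assumes "sl s > 0" "inI s x"
  shows "inI (child lam (if ori then Udig (pos s ori x) else 3 - Udig (pos s ori x)) s) x \<and>
    pos (child lam (if ori then Udig (pos s ori x) else 3 - Udig (pos s ori x)) s)
        (if Udig (pos s ori x) = 2 then \<not> ori else ori) x = Tmap (pos s ori x)"
proof -
  define y where "y = pos s ori x"
  have y01: "0 \<le> y" "y \<le> 1" using pos_range[OF assms] y_def by auto
  define a l where "a = sa s" and "l = sl s"
  have lp: "l > 0" using assms l_def by simp
  show ?thesis
  proof (cases ori)
    case True
    then have x: "x = a + y * l" using y_def lp by (simp add: pos_def a_def l_def field_simps)
    show ?thesis
      unfolding y_def[symmetric] using True y01 lp
      by (auto simp: x Udig_def Tmap_def child_def Let_def pos_def inI_def a_def[symmetric] l_def[symmetric] field_simps)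
  next
    case False
    then have x: "x = a + l - y * l" using y_def lp by (simp add: pos_def a_def l_def field_simps)
    show ?thesis
      unfolding y_def[symmetric] using False y01 lp
      by (auto simp: x Udig_def Tmap_def child_def Let_def pos_def inI_def a_def[symmetric] l_def[symmetric] field_simps)
  qed
qed

lemma path_inv:
  assumes "x \<in> {0..1}" "lam > 0"
  shows "fst (cpath lam x n) \<in> Dset lam n root \<and> inI (fst (cpath lam x n)) x \<and>
         (Tmap ^^ n) x = pos (fst (cpath lam x n)) (snd (cpath lam x n)) x"
proof (induction n)
  case 0 then show ?case using assms by (simp add: root_def inI_def pos_def)
next
  case (Suc n)
  let ?s = "fst (cpath lam x n)" and ?o = "snd (cpath lam x n)"
  have lp: "sl ?s > 0" using tree_facts(1)[OF assms(2)] Suc by blast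
  have d: "digit n x = Udig (pos ?s ?o x)" using Suc by (simp add: digit_def)
  note sg = step_geo[OF lp, of x lam ?o]
  show ?case using Suc sg d Dset_child[of ?s lam n root]
    by (simp add: Let_def)
qed

lemma Tmap0: "(Tmap ^^ k) 0 = 0" by (induction k) (auto simp: Tmap_def)
lemma Tmap1: "(Tmap ^^ k) 1 = 1" by (induction k) (auto simp: Tmap_def)

lemma notE_interior:
  assumes "x \<notin> Eset" "(Tmap ^^ n) x \<in> {0..1}"
  shows "0 < (Tmap ^^ n) x \<and> (Tmap ^^ n) x < 1"
proof (rule ccontr)
  assume "\<not> ?thesis"
  then have "(Tmap ^^ n) x = 0 \<or> (Tmap ^^ n) x = 1" using assms(2) by auto
  then show False
  proof
    assume h: "(Tmap ^^ n) x = 0"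
    have "digit k x = 0" if "k \<ge> n" for k
    proof -
      have "(Tmap ^^ k) x = (Tmap ^^ (k - n)) ((Tmap ^^ n) x)"
        using that by (metis funpow_add le_add_diff_inverse2 o_apply)
      then show ?thesis using h Tmap0 by (simp add: digit_def Udig_def)
    qed
    then have "x \<in> Eset" unfolding Eset_def by blast
    then show False using assms(1) by simp
  next
    assume h: "(Tmap ^^ n) x = 1"
    have "digit k x = 3" if "k \<ge> n" for k
    proof -
      have "(Tmap ^^ k) x = (Tmap ^^ (k - n)) ((Tmap ^^ n) x)"
        using that by (metis funpow_add le_add_diff_inverse2 o_apply)
      then show ?thesis using h Tmap1 by (simp add: digit_def Udig_def)
    qed
    then have "x \<in> Eset" unfolding Eset_def by blast
    then show False using assms(1) by simp
  qed
qed

lemma path_interior: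
  assumes "x \<in> {0..1}" "x \<notin> Eset" "lam > 0"
  shows "sa (fst (cpath lam x n)) < x \<and> x < sa (fst (cpath lam x n)) + sl (fst (cpath lam x n))"
proof -
  let ?s = "fst (cpath lam x n)" and ?o = "snd (cpath lam x n)"
  note pi = path_inv[OF assms(1,3), of n]
  have lp: "sl ?s > 0" using tree_facts(1)[OF assms(3)] pi by blast
  have "(Tmap ^^ n) x \<in> {0..1}" using pos_range[OF lp, of x ?o] pi by simp
  then have "0 < (Tmap ^^ n) x \<and> (Tmap ^^ n) x < 1" by (rule notE_interior[OF assms(2)])
  then have "0 < pos ?s ?o x \<and> pos ?s ?o x < 1" using pi by simp
  then show ?thesis using lp by (cases ?o) (auto simp: pos_def divide_simps)
qed

lemma slope_path:
  assumes "x \<in> {0..1}" "x \<notin> Eset" "lam > 0"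
  shows "slope lam n x = sm (fst (cpath lam x n))"
proof -
  let ?s = "fst (cpath lam x n)"
  note pi = path_inv[OF assms(1,3), of n]
  have int: "x \<in> {sa ?s <..< sa ?s + sl ?s}" using path_interior[OF assms] by simp
  have eq: "aff ?s t = Fn lam n t" if "t \<in> {sa ?s <..< sa ?s + sl ?s}" for t
    using Fn_tree[of ?s lam n t] pi that by (simp add: inI_def)
  have "((aff ?s) has_field_derivative sm ?s) (at x)"
    unfolding aff_def by (auto intro!: derivative_eq_intros)
  then have "(Fn lam n has_field_derivative sm ?s) (at x)"
    by (rule has_field_derivative_transform_within_open[OF _ open_greaterThanLessThan int eq])
  then show ?thesis unfolding slope_def by (rule DERIV_imp_deriv)
qed



definition Sx :: "real \<Rightarrow> real \<Rightarrow> nat \<Rightarrow> st" where "Sx lam x n = fst (cpath lam x n)"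
definition mo :: "real \<Rightarrow> real \<Rightarrow> nat \<Rightarrow> real" where
  "mo lam x n = (if snd (cpath lam x n) then sm (Sx lam x n) else - sm (Sx lam x n))"
definition Num :: "real \<Rightarrow> real \<Rightarrow> nat \<Rightarrow> real" where
  "Num lam x n = real (beta 1 x n) * ln (6 * lam + 1) + real (beta 2 x n) * ln (6 * lam - 1)"
definition Den :: "real \<Rightarrow> nat \<Rightarrow> real" where
  "Den x n = real (beta 0 x n + beta 3 x n) * ln 3 + real (beta 1 x n + beta 2 x n) * ln 6"
definition gam :: "real \<Rightarrow> nat \<Rightarrow> real" where
  "gam lam d = (if d = 1 then ln (6 * lam + 1) else if d = 2 then ln (6 * lam - 1) else 0)"

lemma ratio_eq: "ratio lam x n = Num lam x n / Den x n"
  by (simp add: ratio_def Num_def Den_def)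

lemma digit_range: "digit n x \<in> {0,1,2,3}"
  by (simp add: digit_def Udig_def)

lemma beta_0[simp]: "beta i x 0 = 0" by (simp add: beta_def)

lemma beta_Suc: "beta i x (Suc n) = beta i x n + (if digit n x = i then 1 else 0)"
proof -
  have "{k. k < Suc n \<and> digit k x = i} = {k. k < n \<and> digit k x = i} \<union> (if digit n x = i then {n} else {})"
    by (auto simp: less_Suc_eq)
  then show ?thesis by (simp add: beta_def)
qed

lemma Num_Suc: "Num lam x (Suc n) = Num lam x n + gam lam (digit n x)"
  using digit_range[of n x] by (auto simp: Num_def gam_def beta_Suc algebra_simps)

lemma Den_Suc: "Den x (Suc n) = Den x n + (if digit n x \<in> {0,3} then ln 3 else ln 6)"
  using digit_range[of n x] by (auto simp: Den_def beta_Suc algebra_simps)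

lemma Den_ge: "Den x n \<ge> real n * ln 3"
proof (induction n)
  case 0 then show ?case by (simp add: Den_def)
next
  case (Suc n)
  have l36: "ln 3 \<le> (ln 6::real)" by simp
  have "Den x (Suc n) \<ge> Den x n + ln 3" using l36 by (simp add: Den_Suc)
  then show ?case using Suc by (simp add: algebra_simps)
qed

lemma Den_pos: "n > 0 \<Longrightarrow> Den x n > 0"
proof -
  assume "n > 0"
  then have "real n * ln 3 > 0" by simp
  then show ?thesis using Den_ge[of n x] by linarith
qed

lemma Sx_Suc: "Sx lam x (Suc n) = child lam (if snd (cpath lam x n) then digit n x else 3 - digit n x) (Sx lam x n)"
  by (simp add: Sx_def Let_def)

lemma sl_Sx_pos: "sl (Sx lam x n) > 0"
  by (induction n) (auto simp: Sx_def root_def Let_def child_def)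

lemma sl_Sx: "ln (sl (Sx lam x n)) = - Den x n"
proof (induction n)
  case 0 then show ?case by (simp add: Sx_def Den_def root_def)
next
  case (Suc n)
  have lp: "sl (Sx lam x n) > 0" by (rule sl_Sx_pos)
  have "sl (Sx lam x (Suc n)) = sl (Sx lam x n) / (if digit n x \<in> {0,3} then 3 else 6)"
    using digit_range[of n x] by (auto simp: Sx_Suc child_def Let_def)
  then show ?case using Suc lp by (auto simp: Den_Suc ln_div)
qed

lemma sl_Sx_exp: "sl (Sx lam x n) = exp (- Den x n)"
proof -
  have "sl (Sx lam x n) > 0"
    by (induction n) (auto simp: Sx_def root_def Let_def child_def)
  then show ?thesis using sl_Sx[of lam x n] by (metis exp_ln)
qed

lemma sq_mo: "sq (Sx lam x n) = sqrt (1 + (mo lam x n)\<^sup>2)"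
  by (simp add: sq_def mo_def)

lemma mo_Suc: "mo lam x (Suc n) = (if digit n x = 1 then mo lam x n + 6 * lam * sq (Sx lam x n)
     else if digit n x = 2 then 6 * lam * sq (Sx lam x n) - mo lam x n else mo lam x n)"
  using digit_range[of n x]
  by (auto simp: mo_def Sx_Suc child_def Let_def sq_def)

lemma mo_abs: "\<bar>mo lam x n\<bar> = \<bar>sm (Sx lam x n)\<bar>"
  by (simp add: mo_def)

lemma mo_nonneg: "lam > 1/6 \<Longrightarrow> mo lam x n \<ge> 0"
proof (induction n)
  case 0 then show ?case by (simp add: mo_def Sx_def root_def)
next
  case (Suc n)
  have a: "mo lam x n \<le> sq (Sx lam x n)" using sq_ge_abs[of "Sx lam x n"] mo_abs[of lam x n] by simp
  have b: "sq (Sx lam x n) \<le> 6 * lam * sq (Sx lam x n)" using Suc.prems sq_ge1[of "Sx lam x n"] by simp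
  have c: "0 \<le> 6 * lam * sq (Sx lam x n)" using Suc.prems sq_ge1[of "Sx lam x n"] by simp
  show ?case using Suc a b c by (simp add: mo_Suc)
qed



lemma sq_ge_mo: "sq (Sx lam x n) \<ge> mo lam x n"
  using sq_ge_abs[of "Sx lam x n"] mo_abs[of lam x n] by simp

lemma sq_le_1mo: "lam > 1/6 \<Longrightarrow> sq (Sx lam x n) \<le> 1 + mo lam x n"
proof -
  assume l: "lam > 1/6"
  have m0: "mo lam x n \<ge> 0" using mo_nonneg[OF l] .
  have "sqrt (1 + (mo lam x n)\<^sup>2) \<le> sqrt ((1 + mo lam x n)\<^sup>2)"
    using m0 by (intro real_sqrt_le_mono) (simp add: power2_eq_square algebra_simps)
  then show ?thesis using m0 by (simp add: sq_mo)
qed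

lemma q_bound:
  assumes l: "lam > 1/6"
  shows "Num lam x n \<le> ln (sq (Sx lam x n) + mo lam x n)"
proof (induction n)
  case 0 then show ?case by (simp add: Num_def Sx_def mo_def root_def sq_def)
next
  case (Suc n)
  let ?s = "sq (Sx lam x n)" and ?m = "mo lam x n"
  let ?s' = "sq (Sx lam x (Suc n))" and ?m' = "mo lam x (Suc n)"
  have m0: "?m \<ge> 0" "?m' \<ge> 0" using mo_nonneg[OF l] by auto
  have ms: "?m \<le> ?s" by (rule sq_ge_mo)
  have s1: "?s \<ge> 1" by (rule sq_ge1)
  have ms': "?m' \<le> ?s'" by (rule sq_ge_mo)
  have qpos: "?s + ?m > 0" using m0 s1 by simp
  have f1: "6 * lam + 1 > 0" "6 * lam - 1 > 0" using l by auto
  consider "digit n x = 1" | "digit n x = 2" | "digit n x \<noteq> 1 \<and> digit n x \<noteq> 2" by blast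
  then show ?case
  proof cases
    case 1
    then have me: "?m' = ?m + 6 * lam * ?s" by (simp add: mo_Suc)
    have "(6 * lam + 1) * (?s + ?m) \<le> ?s' + ?m'"
    proof -
      have "(6 * lam - 1) * (?s - ?m) \<ge> 0" using ms f1 by simp
      then show ?thesis using me ms' by (simp add: algebra_simps)
    qed
    then have "ln ((6 * lam + 1) * (?s + ?m)) \<le> ln (?s' + ?m')"
    proof -
      assume h: "(6 * lam + 1) * (?s + ?m) \<le> ?s' + ?m'"
      have p: "0 < (6 * lam + 1) * (?s + ?m)" using qpos f1 by simp
      then have "0 < ?s' + ?m'" using h by linarith
      then show ?thesis using p h by (simp add: ln_le_cancel_iff)
    qed
    then have "ln (6 * lam + 1) + ln (?s + ?m) \<le> ln (?s' + ?m')" using qpos f1 by (simp add: ln_mult)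
    then show ?thesis using Suc 1 by (simp add: Num_Suc gam_def)
  next
    case 2
    then have me: "?m' = 6 * lam * ?s - ?m" by (simp add: mo_Suc)
    have "(6 * lam - 1) * (?s + ?m) \<le> ?s' + ?m'"
    proof -
      have "(6 * lam + 1) * (?s - ?m) \<ge> 0" using ms f1 by simp
      then show ?thesis using me ms' by (simp add: algebra_simps)
    qed
    then have "ln ((6 * lam - 1) * (?s + ?m)) \<le> ln (?s' + ?m')"
    proof -
      assume h: "(6 * lam - 1) * (?s + ?m) \<le> ?s' + ?m'"
      have p: "0 < (6 * lam - 1) * (?s + ?m)" using qpos f1 by simp
      then have "0 < ?s' + ?m'" using h by linarith
      then show ?thesis using p h by (simp add: ln_le_cancel_iff)
    qed
    then have "ln (6 * lam - 1) + ln (?s + ?m) \<le> ln (?s' + ?m')" using qpos f1 by (simp add: ln_mult)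
    then show ?thesis using Suc 2 by (simp add: Num_Suc gam_def)
  next
    case 3
    then have "?m' = ?m" by (simp add: mo_Suc)
    then have "?s' = ?s" by (simp add: sq_mo)
    then show ?thesis using Suc 3 \<open>?m' = ?m\<close> by (simp add: Num_Suc gam_def)
  qed
qed

lemma sq_step_upper:
  assumes l: "lam > 1/6"
  shows "digit n x = 1 \<Longrightarrow> sq (Sx lam x (Suc n)) \<le> (6 * lam + 1) * sq (Sx lam x n)"
    and "digit n x = 2 \<Longrightarrow> sq (Sx lam x (Suc n)) \<le> (6 * lam - 1) * sq (Sx lam x n) + 2"
    and "digit n x \<noteq> 1 \<Longrightarrow> digit n x \<noteq> 2 \<Longrightarrow> sq (Sx lam x (Suc n)) = sq (Sx lam x n)"
proof -
  let ?s = "sq (Sx lam x n)" and ?m = "mo lam x n"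
  let ?s' = "sq (Sx lam x (Suc n))" and ?m' = "mo lam x (Suc n)"
  have m0: "?m \<ge> 0" "?m' \<ge> 0" using mo_nonneg[OF l] by auto
  have s1: "?s \<ge> 1" by (rule sq_ge1)
  show "digit n x = 1 \<Longrightarrow> ?s' \<le> (6 * lam + 1) * ?s"
  proof -
    assume d: "digit n x = 1"
    have "?s' = sqrt (1 + (?m + 6 * lam * ?s)\<^sup>2)" using d by (simp add: sq_mo mo_Suc)
    also have "\<dots> \<le> sqrt (1 + ?m\<^sup>2) + \<bar>6 * lam * ?s\<bar>" by (rule sqrt_shift)
    also have "\<dots> = (6 * lam + 1) * ?s" using l s1 by (simp add: sq_mo[symmetric] algebra_simps)
    finally show ?thesis .
  qed
  show "digit n x = 2 \<Longrightarrow> ?s' \<le> (6 * lam - 1) * ?s + 2"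
  proof -
    assume d: "digit n x = 2"
    have "?s' \<le> 1 + ?m'" using sq_le_1mo[OF l] .
    also have "?m' = 6 * lam * ?s - ?m" using d by (simp add: mo_Suc)
    finally show ?thesis using sq_le_1mo[OF l, of x n] by (simp add: algebra_simps)
  qed
  show "digit n x \<noteq> 1 \<Longrightarrow> digit n x \<noteq> 2 \<Longrightarrow> ?s' = ?s"
    by (simp add: sq_mo mo_Suc)
qed

lemma log_upper:
  assumes l: "lam > 1/6" and lim: "filterlim (\<lambda>n. mo lam x n) at_top sequentially" and e: "\<epsilon> > 0"
  shows "\<exists>C. \<forall>n. ln (sq (Sx lam x n)) \<le> Num lam x n + \<epsilon> * real n + C"
proof -
  define P where "P = (6 * lam - 1) * (exp \<epsilon> - 1)"
  define B where "B = 2 / P"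
  have f: "6 * lam - 1 > 0" using l by simp
  have ee: "exp \<epsilon> - 1 > 0" using e by simp
  from lim have "eventually (\<lambda>n. mo lam x n \<ge> B) sequentially" by (simp add: filterlim_at_top)
  then obtain n0 where n0: "\<And>n. n \<ge> n0 \<Longrightarrow> mo lam x n \<ge> B" by (auto simp: eventually_sequentially)
  define g where "g n = ln (sq (Sx lam x n)) - Num lam x n - \<epsilon> * real n" for n
  have gstep: "g (Suc n) \<le> g n" if "n \<ge> n0" for n
  proof -
    let ?s = "sq (Sx lam x n)" and ?s' = "sq (Sx lam x (Suc n))"
    have s1: "?s \<ge> 1" "?s' \<ge> 1" by (rule sq_ge1)+
    have sB: "?s \<ge> B" using n0[OF that] sq_ge_mo[of lam x n] by linarith
    have "ln ?s' \<le> ln ?s + gam lam (digit n x) + \<epsilon>"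
    proof -
      consider "digit n x = 1" | "digit n x = 2" | "digit n x \<noteq> 1 \<and> digit n x \<noteq> 2" by blast
      then show ?thesis
      proof cases
        case 1
        have "ln ?s' \<le> ln ((6 * lam + 1) * ?s)" using sq_step_upper(1)[OF l 1] s1 by simp
        also have "\<dots> = ln (6 * lam + 1) + ln ?s" using s1 l by (simp add: ln_mult)
        finally show ?thesis using 1 e by (simp add: gam_def)
      next
        case 2
        have "2 \<le> (6 * lam - 1) * ?s * (exp \<epsilon> - 1)"
        proof -
          have Pp: "P > 0" using f ee by (simp add: P_def)
          have "(6 * lam - 1) * B * (exp \<epsilon> - 1) = B * P" by (simp add: algebra_simps P_def)
          also have "\<dots> = 2" using Pp by (simp add: B_def)
          finally have "2 = (6 * lam - 1) * B * (exp \<epsilon> - 1)" by simp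
          also have "\<dots> \<le> (6 * lam - 1) * ?s * (exp \<epsilon> - 1)"
            using sB f ee by (intro mult_right_mono mult_left_mono) auto
          finally show ?thesis .
        qed
        then have "?s' \<le> (6 * lam - 1) * ?s * exp \<epsilon>"
          using sq_step_upper(2)[OF l 2] by (simp add: algebra_simps)
        then have "ln ?s' \<le> ln ((6 * lam - 1) * ?s * exp \<epsilon>)" using s1 by simp
        also have "\<dots> = ln (6 * lam - 1) + ln ?s + \<epsilon>" using s1 f by (simp add: ln_mult)
        finally show ?thesis using 2 by (simp add: gam_def)
      next
        case 3
        then show ?thesis using sq_step_upper(3)[of lam n x] l e by (simp add: gam_def)
      qed
    qed
    then show ?thesis by (simp add: g_def Num_Suc algebra_simps)
  qed
  have mono: "g n \<le> g n0" if "n \<ge> n0" for n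
    using that
  proof (induction n rule: dec_induct)
    case base then show ?case by simp
  next
    case (step n) then show ?case using gstep[of n] by simp
  qed
  define C where "C = Max (g ` {..n0})"
  have gC: "g n \<le> C" for n
  proof (cases "n \<le> n0")
    case True then show ?thesis unfolding C_def by (intro Max_ge) auto
  next
    case False
    then have "g n \<le> g n0" using mono by simp
    also have "g n0 \<le> C" unfolding C_def by (intro Max_ge) auto
    finally show ?thesis .
  qed
  show ?thesis using gC by (intro exI[of _ C]) (simp add: g_def algebra_simps)
qed

lemma Num_le: "lam > 1/6 \<Longrightarrow> Num lam x n \<le> (ln (6 * lam + 1) / ln 6) * Den x n"
proof -
  assume l: "lam > 1/6"
  have a: "ln (6 * lam - 1) \<le> ln (6 * lam + 1)" using l by simp
  have b: "ln (6 * lam + 1) \<ge> 0" using l by simp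
  have "Num lam x n \<le> real (beta 1 x n + beta 2 x n) * ln (6 * lam + 1)"
    unfolding Num_def using mult_left_mono[OF a, of "real (beta 2 x n)"] by (simp add: algebra_simps)
  also have "\<dots> = (ln (6 * lam + 1) / ln 6) * (real (beta 1 x n + beta 2 x n) * ln 6)" by simp
  also have "\<dots> \<le> (ln (6 * lam + 1) / ln 6) * Den x n"
    unfolding Den_def using b by (intro mult_left_mono) auto
  finally show ?thesis .
qed



lemma poly_bounded: "\<exists>M\<ge>0. \<forall>u::real. \<bar>u\<bar> \<le> 2 \<longrightarrow> \<bar>poly Q u\<bar> \<le> M"
proof -
  have "compact ((\<lambda>u. poly Q u) ` {-2..2::real})"
    by (intro compact_continuous_image continuous_intros) auto
  then have "bounded ((\<lambda>u. poly Q u) ` {-2..2::real})" by (rule compact_imp_bounded)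
  then obtain M where M: "\<forall>y\<in>(\<lambda>u. poly Q u) ` {-2..2::real}. norm y \<le> M" by (auto simp: bounded_iff)
  have "\<bar>poly Q u\<bar> \<le> max M 0" if "\<bar>u\<bar> \<le> 2" for u
  proof -
    have "u \<in> {-2..2}" using that by auto
    then have "norm (poly Q u) \<le> M" using M by blast
    then show ?thesis by simp
  qed
  then show ?thesis by (intro exI[of _ "max M 0"]) auto
qed

lemma poly_2diff:
  fixes P :: "real poly"
  shows "\<exists>M\<ge>0. \<forall>w h. \<bar>w\<bar> \<le> 1 \<longrightarrow> 0 \<le> h \<longrightarrow> h \<le> 1 \<longrightarrow>
      \<bar>poly P (w + h) + poly P (w - h) - 2 * poly P w\<bar> \<le> M * h\<^sup>2"
proof -
  obtain M where M: "M \<ge> 0" "\<And>u. \<bar>u\<bar> \<le> 2 \<Longrightarrow> \<bar>poly (pderiv (pderiv P)) u\<bar> \<le> M"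
    using poly_bounded[of "pderiv (pderiv P)"] by blast
  have main: "\<bar>poly P (w + h) + poly P (w - h) - 2 * poly P w\<bar> \<le> (2 * M) * h\<^sup>2"
    if w: "\<bar>w\<bar> \<le> 1" and h: "0 \<le> h" "h \<le> 1" for w h
  proof (cases "h = 0")
    case True then show ?thesis by simp
  next
    case False
    then have hp: "h > 0" using h by simp
    define psi where "psi t = poly P (w + t) + poly P (w - t) - 2 * poly P w" for t
    have dpsi: "DERIV psi t :> poly (pderiv P) (w + t) - poly (pderiv P) (w - t)" for t
      unfolding psi_def
      by (auto intro!: derivative_eq_intros DERIV_chain2[OF poly_DERIV])
    obtain z where z: "0 < z" "z < h" "psi h - psi 0 = (h - 0) * (poly (pderiv P) (w + z) - poly (pderiv P) (w - z))"
      using MVT2[OF hp, where f=psi and f'="\<lambda>t. poly (pderiv P) (w + t) - poly (pderiv P) (w - t)"] dpsi by blast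
    have wz: "w - z < w + z" using z by simp
    obtain y where y: "w - z < y" "y < w + z"
      "poly (pderiv P) (w + z) - poly (pderiv P) (w - z) = ((w + z) - (w - z)) * poly (pderiv (pderiv P)) y"
      using MVT2[OF wz, of "poly (pderiv P)" "poly (pderiv (pderiv P))"] by auto
    have yb: "\<bar>y\<bar> \<le> 2" using y w z h by auto
    have "\<bar>psi h\<bar> = h * (2 * z) * \<bar>poly (pderiv (pderiv P)) y\<bar>"
      using z y hp by (simp add: psi_def abs_mult)
    also have "\<dots> \<le> h * (2 * h) * M"
      using M(2)[OF yb] z hp M(1) by (intro mult_mono) auto
    also have "\<dots> = (2 * M) * h\<^sup>2" by (simp add: power2_eq_square)
    finally show ?thesis by (simp add: psi_def)
  qed
  show ?thesis using M(1) main by (intro exI[of _ "2 * M"]) auto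
qed

lemma child_min: "child lam k s = child lam (min k 3) s"
  by (auto simp: child_def Let_def min_def)

lemma sl_pow: "sl (Sx lam x n) \<le> (1/3) ^ n"
proof -
  have "sl (Sx lam x n) = exp (- Den x n)" by (rule sl_Sx_exp)
  also have "\<dots> \<le> exp (- (real n * ln 3))" using Den_ge[of n x] by simp
  also have "\<dots> = (1/3) ^ n"
    by (simp add: exp_minus exp_of_nat_mult power_divide inverse_eq_divide)
  finally show ?thesis .
qed

lemma sl_small: "e > 0 \<Longrightarrow> \<exists>n0. \<forall>n\<ge>n0. sl (Sx lam x n) < e"
proof -
  assume e: "e > 0"
  obtain n0 where n0: "(1/3::real) ^ n0 < e" using real_arch_pow_inv[OF e, of "1/3"] by auto
  have "sl (Sx lam x n) < e" if "n \<ge> n0" for n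
  proof -
    have "sl (Sx lam x n) \<le> (1/3) ^ n" by (rule sl_pow)
    also have "\<dots> \<le> (1/3) ^ n0" using that by (intro power_decreasing) auto
    finally show ?thesis using n0 by simp
  qed
  then show ?thesis by blast
qed

lemma hoelder_lower:
  assumes lam: "1/6 < lam" "lam < 5/6" and x: "x \<in> {0..1}" "x \<notin> Eset"
    and al: "0 \<le> \<alpha>" "\<alpha> < 1" and K: "K > 0"
    and Kb: "\<And>n. sq (Sx lam x n) \<le> K * sl (Sx lam x n) powr (\<alpha> - 1)"
  shows "pointwise_hoelder (Flam lam) x \<alpha>"
proof -
  have l0: "0 < lam" "lam < 5/6" using lam by auto
  let ?S = "Sx lam x"
  have x01: "0 < x" "x < 1" using path_interior[OF x l0(1), of 0] by (simp_all add: root_facts)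
  define \<delta> where "\<delta> = min x (1 - x)"
  have dp: "\<delta> > 0" using x01 by (simp add: \<delta>_def)
  have C2p: "C2 lam > 0" using Kc_pos[OF l0] lam by (simp add: C2_def add_pos_pos)
  have bound: "\<bar>Flam lam y - Flam lam x\<bar> \<le> C2 lam * K * \<bar>y - x\<bar> powr \<alpha>" if y: "\<bar>y - x\<bar> < \<delta>" for y
  proof (cases "y = x")
    case True then show ?thesis by simp
  next
    case False
    have ypos: "\<bar>y - x\<bar> > 0" using False by simp
    have yI: "inI root y" using y by (auto simp: \<delta>_def inI_def root_def)
    have pinv: "?S n \<in> Dset lam n root \<and> inI (?S n) x" for n
      using path_inv[OF x(1) l0(1), of n] by (simp add: Sx_def)
    obtain n0 where n0: "sl (?S n0) < \<bar>y - x\<bar>" using sl_small[OF ypos, of lam x] by blast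
    have "\<not> inI (?S n0) y" using pinv[of n0] n0 by (auto simp: inI_def)
    then obtain p where p: "inI (?S p) y" "\<not> inI (?S (Suc p)) y"
      using exists_step[of "\<lambda>n. inI (?S n) y"] yI by (auto simp: Sx_def)
    define i where "i = (if snd (cpath lam x p) then digit p x else 3 - digit p x)"
    have i3: "i \<le> 3" using digit_range[of p x] by (auto simp: i_def)
    have Si: "?S (Suc p) = child lam i (?S p)" by (simp add: Sx_Suc i_def)
    obtain j0 where "inI (child lam j0 (?S p)) y" using child_cover[OF p(1)] by blast
    then have yj: "inI (child lam (min j0 3) (?S p)) y" by (metis child_min)
    define j where "j = min j0 3"
    have j3: "j \<le> 3" by (simp add: j_def)
    have xi: "inI (child lam i (?S p)) x" using pinv[of "Suc p"] Si by simp
    have yj': "inI (child lam j (?S p)) y" using yj by (simp add: j_def)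
    have ij: "i \<noteq> j" using p(2) yj' Si by auto
    have sqp: "sq (?S p) \<ge> 0" using sq_ge1[of "?S p"] by simp
    have main: "\<bar>Flam lam y - Flam lam x\<bar> \<le> C2 lam * sq (?S p) * \<bar>y - x\<bar>"
    proof (cases "i < j")
      case True
      have "\<bar>Flam lam y - Flam lam x\<bar> \<le> C2 lam * sq (?S p) * (y - x)"
        using pair_bound[OF l0 _ True j3 xi yj'] pinv by blast
      also have "\<dots> \<le> C2 lam * sq (?S p) * \<bar>y - x\<bar>" using C2p sqp
        by (intro mult_left_mono) auto
      finally show ?thesis .
    next
      case False
      then have ji: "j < i" using ij by simp
      have "\<bar>Flam lam x - Flam lam y\<bar> \<le> C2 lam * sq (?S p) * (x - y)"
        using pair_bound[OF l0 _ ji i3 yj' xi] pinv by blast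
      also have "\<dots> \<le> C2 lam * sq (?S p) * \<bar>y - x\<bar>" using C2p sqp
        by (intro mult_left_mono) auto
      finally show ?thesis by simp
    qed
    have dist: "\<bar>y - x\<bar> \<le> sl (?S p)" using p(1) pinv[of p] by (auto simp: inI_def)
    have "sq (?S p) \<le> K * sl (?S p) powr (\<alpha> - 1)" by (rule Kb)
    also have "\<dots> \<le> K * \<bar>y - x\<bar> powr (\<alpha> - 1)"
      using powr_mono2'[of "\<alpha> - 1" "\<bar>y - x\<bar>" "sl (?S p)"] al ypos dist K by auto
    finally have sqb: "sq (?S p) \<le> K * \<bar>y - x\<bar> powr (\<alpha> - 1)" .
    have "\<bar>Flam lam y - Flam lam x\<bar> \<le> C2 lam * (K * \<bar>y - x\<bar> powr (\<alpha> - 1)) * \<bar>y - x\<bar>"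
      using main sqb C2p by (smt (verit) abs_ge_zero mult_right_mono mult_left_mono)
    also have "\<dots> = C2 lam * K * \<bar>y - x\<bar> powr \<alpha>"
    proof -
      have "\<bar>y - x\<bar> powr \<alpha> = \<bar>y - x\<bar> powr ((\<alpha> - 1) + 1)" by simp
      also have "\<dots> = \<bar>y - x\<bar> powr (\<alpha> - 1) * \<bar>y - x\<bar> powr 1" by (rule powr_add)
      also have "\<dots> = \<bar>y - x\<bar> powr (\<alpha> - 1) * \<bar>y - x\<bar>" using ypos by simp
      finally show ?thesis by simp
    qed
    finally show ?thesis .
  qed
  show ?thesis unfolding pointwise_hoelder_def
    by (rule exI[of _ "[:Flam lam x:]"], rule exI[of _ "C2 lam * K"], rule exI[of _ \<delta>])
       (use dp bound in auto)
qed



lemma powr_split: "(l::real) > 0 \<Longrightarrow> l powr a = l * l powr (a - 1)"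
proof -
  assume l: "l > 0"
  have "l powr a = l powr ((a - 1) + 1)" by simp
  also have "\<dots> = l powr (a - 1) * l powr 1" by (rule powr_add)
  finally show ?thesis using l by simp
qed

lemma abs4: fixes u1 u2 u3 G :: real
  shows "\<bar>u1 + u2 - 2 * u3 + G\<bar> \<le> \<bar>u1\<bar> + \<bar>u2\<bar> + 2 * \<bar>u3\<bar> + \<bar>G\<bar>"
  by (cases "u1 \<ge> 0"; cases "u2 \<ge> 0"; cases "u3 \<ge> 0"; cases "G \<ge> 0") auto

lemma key_ineq:
  assumes lam: "1/6 < lam" "lam < 5/6" and x: "x \<in> {0..1}"
    and C: "C \<ge> 0" and \<delta>: "\<delta> > 0"
    and Hall: "\<forall>y. \<bar>y - x\<bar> < \<delta> \<longrightarrow> \<bar>Flam lam y - poly P (y - x)\<bar> \<le> C * \<bar>y - x\<bar> powr \<alpha>"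
    and al: "\<alpha> \<ge> 0"
    and M1: "M \<ge> 0" and Mall: "\<forall>w h. \<bar>w\<bar> \<le> 1 \<longrightarrow> 0 \<le> h \<longrightarrow> h \<le> 1 \<longrightarrow>
      \<bar>poly P (w + h) + poly P (w - h) - 2 * poly P w\<bar> \<le> M * h\<^sup>2"
    and ls: "sl (Sx lam x n) < min \<delta> 1"
  shows "2 * lam * sl (Sx lam x n) * sq (Sx lam x n) \<le> 4 * C * sl (Sx lam x n) powr \<alpha> + M * (sl (Sx lam x n))\<^sup>2"
proof -
  have H: "\<bar>Flam lam y - poly P (y - x)\<bar> \<le> C * \<bar>y - x\<bar> powr \<alpha>" if "\<bar>y - x\<bar> < \<delta>" for y
    using Hall that by blast
  have M: "M \<ge> 0" "\<bar>poly P (w + h) + poly P (w - h) - 2 * poly P w\<bar> \<le> M * h\<^sup>2"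
    if "\<bar>w\<bar> \<le> 1" "0 \<le> h" "h \<le> 1" for w h
    using M1 Mall that by auto
  have l0: "0 < lam" "lam < 5/6" using lam by auto
  define s where "s = Sx lam x n"
  have pinv: "s \<in> Dset lam n root" "inI s x"
    using path_inv[OF x l0(1), of n] by (simp_all add: Sx_def s_def)
  define a l c m where "a = sa s" and "l = sl s" and "c = sc s" and "m = sm s"
  have lp: "l > 0" using tree_facts(1)[OF l0(1) pinv(1)] l_def by simp
  have ll: "l < \<delta>" "l < 1" using ls by (auto simp: l_def s_def)
  have xa: "a \<le> x" "x \<le> a + l" using pinv(2) by (auto simp: inI_def a_def l_def)
  have Fa: "Flam lam a = c" using bdry_left(1)[OF l0 pinv(1) pinv(2)] by (simp add: a_def c_def)
  have Fb: "Flam lam (a + l) = c + m * l" using bdry_right(1)[OF l0 pinv(1) pinv(2)]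
    by (simp add: a_def c_def l_def m_def)
  have c2: "child lam 2 s \<in> Dset lam (Suc n) root" using Dset_child[OF pinv(1)] .
  have c2i: "inI (child lam 2 s) (sa (child lam 2 s))" using lp
    by (simp add: inI_def child_def Let_def l_def)
  have Fm: "Flam lam (a + l/2) = c + m * l / 2 + lam * l * sq s"
    using bdry_left(1)[OF l0 c2 c2i] by (simp add: child_def Let_def a_def c_def l_def m_def sq_def)
  define g where "g t = poly P (t - x)" for t
  have Ht: "\<bar>Flam lam t - g t\<bar> \<le> C * l powr \<alpha>" if "a \<le> t" "t \<le> a + l" for t
  proof -
    have d: "\<bar>t - x\<bar> \<le> l" using that xa by auto
    have "\<bar>Flam lam t - g t\<bar> \<le> C * \<bar>t - x\<bar> powr \<alpha>" using H[of t] d ll by (simp add: g_def)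
    also have "\<dots> \<le> C * l powr \<alpha>" using d al C by (intro mult_left_mono powr_mono2) auto
    finally show ?thesis .
  qed
  have h1: "\<bar>Flam lam a - g a\<bar> \<le> C * l powr \<alpha>" using Ht[of a] lp by simp
  have h2: "\<bar>Flam lam (a + l) - g (a + l)\<bar> \<le> C * l powr \<alpha>" using Ht[of "a + l"] lp by simp
  have h3: "\<bar>Flam lam (a + l/2) - g (a + l/2)\<bar> \<le> C * l powr \<alpha>" using Ht[of "a + l/2"] lp by simp
  have w: "\<bar>a + l/2 - x\<bar> \<le> 1" using xa ll lp by auto
  have gm: "\<bar>g (a + l) + g a - 2 * g (a + l/2)\<bar> \<le> M * (l/2)\<^sup>2"
    using M(2)[OF w, of "l/2"] lp ll by (simp add: g_def algebra_simps)
  have gm2: "M * (l/2)\<^sup>2 \<le> M * l\<^sup>2" using M1 lp by (intro mult_left_mono) (auto simp: power2_eq_square)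
  have E: "Flam lam a + Flam lam (a + l) - 2 * Flam lam (a + l/2) = - (2 * lam * l * sq s)"
    using Fa Fb Fm by (simp add: algebra_simps)
  have "2 * lam * l * sq s = \<bar>Flam lam a + Flam lam (a + l) - 2 * Flam lam (a + l/2)\<bar>"
    using E l0 lp sq_ge1[of s] by simp
  also have "\<dots> \<le> \<bar>Flam lam a - g a\<bar> + \<bar>Flam lam (a + l) - g (a + l)\<bar> + 2 * \<bar>Flam lam (a + l/2) - g (a + l/2)\<bar>
      + \<bar>g (a + l) + g a - 2 * g (a + l/2)\<bar>"
    using abs4[of "Flam lam a - g a" "Flam lam (a + l) - g (a + l)" "Flam lam (a + l/2) - g (a + l/2)"
        "g (a + l) + g a - 2 * g (a + l/2)"] by (simp add: algebra_simps)
  also have "\<dots> \<le> 4 * C * l powr \<alpha> + M * l\<^sup>2"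
  proof -
    have gm3: "\<bar>g (a + l) + g a - 2 * g (a + l / 2)\<bar> \<le> M * l\<^sup>2" using gm gm2 by linarith
    have "\<bar>Flam lam a - g a\<bar> + \<bar>Flam lam (a + l) - g (a + l)\<bar> + 2 * \<bar>Flam lam (a + l/2) - g (a + l/2)\<bar>
      + \<bar>g (a + l) + g a - 2 * g (a + l/2)\<bar> \<le> C * l powr \<alpha> + C * l powr \<alpha> + 2 * (C * l powr \<alpha>) + M * l\<^sup>2"
      using h1 h2 h3 gm3 by (intro add_mono mult_left_mono) auto
    then show ?thesis by (simp add: algebra_simps)
  qed
  finally show ?thesis by (simp add: s_def l_def)
qed

lemma hoelder_upper:
  assumes lam: "1/6 < lam" "lam < 5/6" and x: "x \<in> {0..1}"
    and al: "\<alpha> \<ge> 0" and ph: "pointwise_hoelder (Flam lam) x \<alpha>"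
  shows "\<alpha> \<le> 1 \<and> (\<exists>K>0. \<exists>n1. \<forall>n\<ge>n1. sq (Sx lam x n) \<le> K * sl (Sx lam x n) powr (\<alpha> - 1))"
proof -
  obtain P C0 \<delta> where \<delta>: "\<delta> > 0" and H0: "\<And>y. \<bar>y - x\<bar> < \<delta> \<Longrightarrow> \<bar>Flam lam y - poly P (y - x)\<bar> \<le> C0 * \<bar>y - x\<bar> powr \<alpha>"
    using ph unfolding pointwise_hoelder_def by blast
  define C where "C = max C0 0"
  have C: "C \<ge> 0" by (simp add: C_def)
  have H: "\<bar>Flam lam y - poly P (y - x)\<bar> \<le> C * \<bar>y - x\<bar> powr \<alpha>" if "\<bar>y - x\<bar> < \<delta>" for y
  proof -
    have "C0 * \<bar>y - x\<bar> powr \<alpha> \<le> C * \<bar>y - x\<bar> powr \<alpha>" by (simp add: C_def mult_right_mono)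
    then show ?thesis using H0[OF that] by linarith
  qed
  obtain M where M: "M \<ge> 0" "\<And>w h. \<bar>w\<bar> \<le> 1 \<Longrightarrow> 0 \<le> h \<Longrightarrow> h \<le> 1 \<Longrightarrow>
      \<bar>poly P (w + h) + poly P (w - h) - 2 * poly P w\<bar> \<le> M * h\<^sup>2"
    using poly_2diff[of P] by blast
  have Hall: "\<forall>y. \<bar>y - x\<bar> < \<delta> \<longrightarrow> \<bar>Flam lam y - poly P (y - x)\<bar> \<le> C * \<bar>y - x\<bar> powr \<alpha>"
    using H by blast
  have Mall: "\<forall>w h. \<bar>w\<bar> \<le> 1 \<longrightarrow> 0 \<le> h \<longrightarrow> h \<le> 1 \<longrightarrow>
      \<bar>poly P (w + h) + poly P (w - h) - 2 * poly P w\<bar> \<le> M * h\<^sup>2" using M(2) by blast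
  note key = key_ineq[OF lam x C \<delta> Hall al M(1) Mall]
  have l0: "0 < lam" using lam by simp
  have lpos: "sl (Sx lam x n) > 0" for n by (rule sl_Sx_pos)
  have a1: "\<alpha> \<le> 1"
  proof (rule ccontr)
    assume "\<not> \<alpha> \<le> 1"
    then have ag: "\<alpha> - 1 > 0" by simp
    define A where "A = 4 * C + 1"
    have Ap: "A > 0" using C by (simp add: A_def)
    define t0 where "t0 = min (min \<delta> 1) (min (lam / (M + 1)) ((lam / A) powr (1 / (\<alpha> - 1))))"
    have t0p: "t0 > 0" using \<delta> l0 M(1) Ap by (simp add: t0_def)
    obtain n where n: "sl (Sx lam x n) < t0" using sl_small[OF t0p, of lam x] by blast
    define l where "l = sl (Sx lam x n)"
    have lp: "l > 0" using lpos by (simp add: l_def)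
    have ls: "sl (Sx lam x n) < min \<delta> 1" using n by (simp add: t0_def)
    have k: "2 * lam * l * sq (Sx lam x n) \<le> 4 * C * l powr \<alpha> + M * l\<^sup>2"
      using key[OF ls] by (simp add: l_def)
    have "l powr (\<alpha> - 1) < t0 powr (\<alpha> - 1)"
      using n lp ag by (intro powr_less_mono2) (auto simp: l_def)
    also have "\<dots> \<le> ((lam / A) powr (1 / (\<alpha> - 1))) powr (\<alpha> - 1)"
      using t0p ag by (intro powr_mono2) (auto simp: t0_def)
    also have "\<dots> = lam / A" using ag Ap l0 by (simp add: powr_powr)
    finally have lpa: "l powr (\<alpha> - 1) < lam / A" .
    have "4 * C * l powr (\<alpha> - 1) \<le> 4 * C * (lam / A)" using lpa C by (intro mult_left_mono) auto
    also have "\<dots> < lam" using Ap l0 by (simp add: A_def field_simps)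
    finally have b1: "4 * C * l powr (\<alpha> - 1) < lam" .
    have "l < lam / (M + 1)" using n by (simp add: l_def t0_def)
    then have "M * l \<le> M * (lam / (M + 1))" using M(1) by (intro mult_left_mono) auto
    also have "\<dots> < lam" using M(1) l0 by (simp add: field_simps)
    finally have b2: "M * l < lam" .
    have "2 * lam * l \<le> 2 * lam * l * sq (Sx lam x n)"
      using sq_ge1[of "Sx lam x n"] l0 lp by simp
    also have "\<dots> \<le> 4 * C * l powr \<alpha> + M * l\<^sup>2" by (rule k)
    also have "\<dots> = l * (4 * C * l powr (\<alpha> - 1) + M * l)"
      using powr_split[OF lp, of \<alpha>] by (simp add: algebra_simps power2_eq_square)
    also have "\<dots> < l * (lam + lam)" using b1 b2 lp by (intro mult_strict_left_mono) auto
    finally show False by simp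
  qed
  obtain n1 where n1: "\<And>n. n \<ge> n1 \<Longrightarrow> sl (Sx lam x n) < min \<delta> 1"
    using sl_small[of "min \<delta> 1" lam x] \<delta> by auto
  define K where "K = (4 * C + M) / (2 * lam) + 1"
  have "(4 * C + M) / (2 * lam) \<ge> 0" using C M(1) l0 by simp
  then have Kp: "K > 0" by (simp add: K_def)
  have "sq (Sx lam x n) \<le> K * sl (Sx lam x n) powr (\<alpha> - 1)" if "n \<ge> n1" for n
  proof -
    define l where "l = sl (Sx lam x n)"
    define q where "q = sq (Sx lam x n)"
    have lp: "l > 0" using lpos by (simp add: l_def)
    have l1: "l \<le> 1" using n1[OF that] by (simp add: l_def)
    have k: "2 * lam * l * q \<le> 4 * C * l powr \<alpha> + M * l\<^sup>2"
      using key[OF n1[OF that]] by (simp add: l_def q_def)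
    have "l\<^sup>2 \<le> l" using lp l1 by (simp add: power2_eq_square mult_le_cancel_left1)
    also have "l = l powr 1" using lp by simp
    also have "\<dots> \<le> l powr \<alpha>" using a1 lp l1 by (intro powr_mono') auto
    finally have "M * l\<^sup>2 \<le> M * l powr \<alpha>" using M(1) by (intro mult_left_mono) auto
    then have "2 * lam * l * q \<le> (4 * C + M) * l powr \<alpha>" using k by (simp add: algebra_simps)
    also have "\<dots> = l * ((4 * C + M) * l powr (\<alpha> - 1))" using powr_split[OF lp, of \<alpha>] by simp
    finally have "l * (2 * lam * q) \<le> l * ((4 * C + M) * l powr (\<alpha> - 1))" by (simp add: algebra_simps)
    then have "2 * lam * q \<le> (4 * C + M) * l powr (\<alpha> - 1)" using lp by simp
    then have "q \<le> ((4 * C + M) / (2 * lam)) * l powr (\<alpha> - 1)" using l0 by (simp add: field_simps)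
    also have "\<dots> \<le> K * l powr (\<alpha> - 1)" by (intro mult_right_mono) (auto simp: K_def)
    finally show ?thesis by (simp add: l_def q_def)
  qed
  then show ?thesis using a1 Kp by blast
qed



lemma ev_bounded:
  fixes f :: "nat \<Rightarrow> real"
  assumes "eventually (\<lambda>n. f n \<le> C) sequentially"
  shows "\<exists>C'. \<forall>n. f n \<le> C'"
proof -
  obtain N where N: "\<And>n. n \<ge> N \<Longrightarrow> f n \<le> C" using assms by (auto simp: eventually_sequentially)
  define C' where "C' = max C (Max (f ` {..N}))"
  have "f n \<le> C'" for n
  proof (cases "n \<le> N")
    case True
    then have "f n \<le> Max (f ` {..N})" by (intro Max_ge) auto
    then show ?thesis by (simp add: C'_def)
  next
    case False then show ?thesis using N[of n] by (simp add: C'_def)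
  qed
  then show ?thesis by blast
qed

lemma ratio_le:
  assumes "lam > 1/6"
  shows "ratio lam x n \<le> ln (6 * lam + 1) / ln 6"
proof (cases "n = 0")
  case True
  have "ln (6 * lam + 1) / ln 6 \<ge> 0" using assms by simp
  then show ?thesis using True by (simp add: ratio_eq Den_def)
next
  case False
  then have D: "Den x n > 0" by (intro Den_pos) simp
  have "Num lam x n \<le> (ln (6 * lam + 1) / ln 6) * Den x n" by (rule Num_le[OF assms])
  then show ?thesis using D by (simp add: ratio_eq divide_simps)
qed

lemma sl_powr: "sl (Sx lam x n) powr b = exp (- b * Den x n)"
  using sl_Sx_pos[of lam x n] by (simp add: powr_def sl_Sx)

theorem proposition3p14:
  fixes lam x :: real
  assumes "1/6 < lam" and "lam < 5/6"
    and "x \<in> {0..1}" and "x \<notin> Eset"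
  shows "hoelder_exponent (Flam lam) x \<le> 1 - max (limsup (\<lambda>n. ereal (ratio lam x n))) 0
         \<and> (x \<in> Iset lam \<longrightarrow>
           hoelder_exponent (Flam lam) x = 1 - max (limsup (\<lambda>n. ereal (ratio lam x n))) 0)"
proof -
  note lam = assms(1,2) and x = assms(3,4)
  have l0: "0 < lam" using lam by simp
  define L where "L = limsup (\<lambda>n. ereal (ratio lam x n))"
  define rp where "rp = ln (6 * lam + 1) / ln 6"
  have rp: "0 \<le> rp" "rp < 1" using lam by (auto simp: rp_def)
  have Lrp: "L \<le> ereal rp" unfolding L_def
    by (rule Limsup_bounded) (use ratio_le[OF lam(1)] in \<open>auto simp: rp_def\<close>)
  obtain r where r: "max L 0 = ereal r" "0 \<le> r" "r \<le> rp"
  proof -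
    have "0 \<le> max L 0" "max L 0 \<le> ereal rp" using Lrp rp by auto
    then show ?thesis using that by (cases "max L 0") auto
  qed
  define S where "S = {ereal \<alpha> |\<alpha>. \<alpha> \<ge> 0 \<and> pointwise_hoelder (Flam lam) x \<alpha>}"
  have hS: "hoelder_exponent (Flam lam) x = Sup S" by (simp add: hoelder_exponent_def S_def)
  have D0: "Den x n \<ge> 0" for n using Den_ge[of n x] by (smt (verit) ln_ge_zero of_nat_0_le_iff mult_nonneg_nonneg)
  have up: "z \<le> ereal (1 - r)" if z: "z \<in> S" for z
  proof -
    obtain \<alpha> where \<alpha>: "z = ereal \<alpha>" "\<alpha> \<ge> 0" "pointwise_hoelder (Flam lam) x \<alpha>" using z by (auto simp: S_def)
    obtain K n1 where a1: "\<alpha> \<le> 1" and K: "K > 0" and Kb: "\<And>n. n \<ge> n1 \<Longrightarrow> sq (Sx lam x n) \<le> K * sl (Sx lam x n) powr (\<alpha> - 1)"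
      using hoelder_upper[OF lam x(1) \<alpha>(2,3)] by blast
    define c where "c = \<bar>ln K + ln 2\<bar>"
    have Lb: "L \<le> ereal (1 - \<alpha>)"
    proof (rule ereal_le_epsilon2)
      fix e :: real assume e: "e > 0"
      define N2 where "N2 = nat \<lceil>c / (e * ln 3)\<rceil> + 1"
      have ev: "ereal (ratio lam x n) \<le> ereal (1 - \<alpha>) + ereal e" if n: "n \<ge> max n1 N2" for n
      proof -
        have npos: "n > 0" using n by (simp add: N2_def)
        have D: "Den x n > 0" using Den_pos[OF npos] .
        let ?q = "sq (Sx lam x n)"
        have q1: "?q \<ge> 1" by (rule sq_ge1)
        have "ln ?q \<le> ln (K * sl (Sx lam x n) powr (\<alpha> - 1))" using Kb[of n] n q1 by simp
        also have "\<dots> = ln K + (1 - \<alpha>) * Den x n" using K by (simp add: sl_powr ln_mult algebra_simps)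
        finally have u1: "ln ?q \<le> ln K + (1 - \<alpha>) * Den x n" .
        have "Num lam x n \<le> ln (?q + mo lam x n)" by (rule q_bound[OF lam(1)])
        also have "\<dots> \<le> ln (2 * ?q)"
          using sq_ge_mo[of lam x n] mo_nonneg[OF lam(1), of x n] q1 by simp
        also have "\<dots> = ln 2 + ln ?q" using q1 by (simp add: ln_mult)
        finally have u2: "Num lam x n \<le> (1 - \<alpha>) * Den x n + (ln K + ln 2)" using u1 by simp
        have "real n \<ge> c / (e * ln 3)" using n by (simp add: N2_def) linarith
        then have "real n * ln 3 \<ge> c / e" using e by (simp add: field_simps)
        then have "Den x n \<ge> c / e" using Den_ge[of n x] by simp
        then have ce: "c \<le> e * Den x n" using e by (simp add: field_simps)
        have "Num lam x n \<le> (1 - \<alpha> + e) * Den x n" using u2 ce by (simp add: c_def algebra_simps)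
        then have "ratio lam x n \<le> 1 - \<alpha> + e" using D by (simp add: ratio_eq divide_simps)
        then show ?thesis by simp
      qed
      have "eventually (\<lambda>n. ereal (ratio lam x n) \<le> ereal (1 - \<alpha>) + ereal e) sequentially"
        unfolding eventually_sequentially using ev by blast
      then show "L \<le> ereal (1 - \<alpha>) + ereal e" unfolding L_def by (rule Limsup_bounded)
    qed
    have "max L 0 \<le> ereal (1 - \<alpha>)" using Lb a1 by simp
    then have "r \<le> 1 - \<alpha>" using r by simp
    then show ?thesis using \<alpha> by simp
  qed
  have part1: "Sup S \<le> ereal (1 - r)" by (rule Sup_least) (use up in blast)
  have "(1::ereal) - ereal r = ereal (1 - r)" by (metis ereal_minus(1) one_ereal_def)
  then have eqr: "1 - max L 0 = ereal (1 - r)" using r(1) by simp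
  have part2: "ereal (1 - r) \<le> Sup S" if xI: "x \<in> Iset lam"
  proof -
    have slope_eq: "\<bar>slope lam n x\<bar> = mo lam x n" for n
      using slope_path[OF x l0, of n] mo_abs[of lam x n] mo_nonneg[OF lam(1), of x n]
      by (simp add: Sx_def)
    have lim: "filterlim (\<lambda>n. mo lam x n) at_top sequentially"
      using xI by (simp add: Iset_def slope_eq)
    have inS: "ereal \<alpha> \<in> S" if al: "0 \<le> \<alpha>" "\<alpha> < 1 - r" for \<alpha>
    proof -
      define \<epsilon> where "\<epsilon> = (1 - r - \<alpha>) / 3"
      have ep: "\<epsilon> > 0" using al by (simp add: \<epsilon>_def)
      have "L < ereal (r + \<epsilon>)"
      proof -
        have "L \<le> max L 0" by simp
        also have "\<dots> = ereal r" by (rule r(1))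
        also have "\<dots> < ereal (r + \<epsilon>)" using ep by simp
        finally show ?thesis .
      qed
      then have ev1: "eventually (\<lambda>n. ereal (ratio lam x n) < ereal (r + \<epsilon>)) sequentially"
        unfolding L_def by (rule Limsup_lessD)
      obtain C where C: "\<And>n. ln (sq (Sx lam x n)) \<le> Num lam x n + (\<epsilon> * ln 3) * real n + C"
        using log_upper[OF lam(1) lim, of "\<epsilon> * ln 3"] ep by auto
      have ev2: "eventually (\<lambda>n. ln (sq (Sx lam x n)) - (1 - \<alpha>) * Den x n \<le> C) sequentially"
      proof -
        have "eventually (\<lambda>n. n > 0 \<and> ereal (ratio lam x n) < ereal (r + \<epsilon>)) sequentially"
          using ev1 eventually_gt_at_top[of 0] by eventually_elim auto
        then show ?thesis
        proof eventually_elim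
          case (elim n)
          then have D: "Den x n > 0" using Den_pos by simp
          have "ratio lam x n < r + \<epsilon>" using elim by simp
          then have "Num lam x n < (r + \<epsilon>) * Den x n" using D by (simp add: ratio_eq divide_simps)
          moreover have "(\<epsilon> * ln 3) * real n \<le> \<epsilon> * Den x n"
          proof -
            have "\<epsilon> * (real n * ln 3) \<le> \<epsilon> * Den x n"
              using Den_ge[of n x] ep by (intro mult_left_mono) auto
            moreover have "(\<epsilon> * ln 3) * real n = \<epsilon> * (real n * ln 3)" by simp
            ultimately show ?thesis by linarith
          qed
          moreover have "(r + \<epsilon>) * Den x n + \<epsilon> * Den x n \<le> (1 - \<alpha>) * Den x n"
          proof -
            have "r + 2 * \<epsilon> \<le> 1 - \<alpha>" using al unfolding \<epsilon>_def by (simp add: field_simps)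
            then have "(r + 2 * \<epsilon>) * Den x n \<le> (1 - \<alpha>) * Den x n" using D by (intro mult_right_mono) auto
            then show ?thesis by (simp add: algebra_simps)
          qed
          ultimately show ?case using C[of n] by linarith
        qed
      qed
      obtain C' where C': "\<And>n. ln (sq (Sx lam x n)) - (1 - \<alpha>) * Den x n \<le> C'"
        using ev_bounded[OF ev2] by blast
      have Kb: "sq (Sx lam x n) \<le> exp C' * sl (Sx lam x n) powr (\<alpha> - 1)" for n
      proof -
        have q1: "sq (Sx lam x n) \<ge> 1" by (rule sq_ge1)
        have "sq (Sx lam x n) = exp (ln (sq (Sx lam x n)))" using q1 by simp
        also have "\<dots> \<le> exp (C' + (1 - \<alpha>) * Den x n)" using C'[of n] by simp
        also have "\<dots> = exp C' * exp (- (\<alpha> - 1) * Den x n)"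
          by (subst exp_add[symmetric]) (simp add: algebra_simps)
        also have "\<dots> = exp C' * sl (Sx lam x n) powr (\<alpha> - 1)" by (simp add: sl_powr)
        finally show ?thesis .
      qed
      have "\<alpha> < 1" using al r by simp
      then have "pointwise_hoelder (Flam lam) x \<alpha>"
        using hoelder_lower[OF lam x al(1) _ _ Kb] by simp
      then show ?thesis using al by (auto simp: S_def)
    qed
    have r1: "r < 1" using r rp by simp
    have S0: "0 \<le> Sup S" using inS[of 0] r1 by (metis Sup_upper order_refl zero_ereal_def diff_gt_0_iff_gt)
    show ?thesis
    proof (rule ereal_le_epsilon2)
      fix e :: real assume e: "e > 0"
      show "ereal (1 - r) \<le> Sup S + ereal e"
      proof (cases "e < 1 - r")
        case True
        have "ereal (1 - r - e) \<le> Sup S" using inS[of "1 - r - e"] True e by (intro Sup_upper) auto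
        then have "ereal (1 - r - e) + ereal e \<le> Sup S + ereal e" by (rule add_right_mono)
        then show ?thesis by simp
      next
        case False
        have "ereal (1 - r) \<le> 0 + ereal e" using False by simp
        also have "\<dots> \<le> Sup S + ereal e" using S0 by (rule add_right_mono)
        finally show ?thesis .
      qed
    qed
  qed
  show ?thesis
    unfolding hS L_def[symmetric] eqr using part1 part2 by (auto intro: antisym)
qed


end
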